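(* Let $V$ be a matrix-valued function of $y$, $z$, and $\varepsilon$ that, together with its first-order derivatives, is smooth and $\mathcal{O}(1)$ as $\varepsilon \downarrow 0$. If $z = \psi_{(q)}(y,\varepsilon)$ and \[ V(\cdot\,,\psi_{(q)},\varepsilon) = \sum_{\ell=0}^q \varepsilon^\ell V_\ell + \mathcal{O}(\varepsilon^{q+1}), \qquad g_1(\cdot\,,\psi_{(q)},\varepsilon) = \sum_{\ell=0}^q \varepsilon^\ell g_{1,\ell} + \mathcal{O}(\varepsilon^{q+1}), \] then \[ \frac{dV}{dt}(\cdot\,,\psi_{(q)},\varepsilon) = \sum_{i=0}^q \varepsilon^{i+1} \sum_{\ell=0}^i \frac{dV_\ell}{dy}\, g_{1,i-\ell} + \mathcal{O}(\varepsilon^{q+1}). \]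
   Context: Consider the fast–slow system $y' = \varepsilon g_1(y,z,\varepsilon)$, $z' = g_2(y,z,\varepsilon)$ with $y \in \mathbf{R}^m$ slow and $z \in \mathbf{R}^n$ fast, possessing a slow manifold $\mathcal{M}_\varepsilon = \{z = h_\varepsilon(y)\}$ satisfying the invariance equation $g_2(y,h_\varepsilon,\varepsilon) = \varepsilon Dh_\varepsilon(y)\, g_1(y,h_\varepsilon,\varepsilon)$, with $h_\varepsilon$ smooth ($C^r$ for every finite $r$) in $y$ and $\varepsilon$. Here $z = \psi_{(q)}(y,\varepsilon)$ is a function approximating the slow manifold up to and including $\mathcal{O}(\varepsilon^q)$, i.e. $\psi_{(q)} = h_\varepsilon + \mathcal{O}(\varepsilon^{q+1})$ and $D\psi_{(q)} = Dh_\varepsilon + \mathcal{O}(\varepsilon^{q+1})$ (e.g. the CSP manifold of order $q$). The time derivative is $dV/dt = (DV)g = \varepsilon (D_y V) g_1 + (D_z V) g_2$, and $dV_\ell/dy$ denotes the total derivative with respect to $y$. *)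

theory Defs
  imports "HOL-Analysis.Analysis" "HOL-Library.Landau_Symbols"
begin

fun dd :: "'a::real_normed_vector list \<Rightarrow> ('a \<Rightarrow> 'b::real_normed_vector) \<Rightarrow> 'a \<Rightarrow> 'b" where
  "dd [] f = f"
| "dd (v # vs) f = (\<lambda>x. frechet_derivative (dd vs f) (at x) v)"

definition smooth_on :: "'a::real_normed_vector set \<Rightarrow> ('a \<Rightarrow> 'b::real_normed_vector) \<Rightarrow> bool" where
  "smooth_on S f \<longleftrightarrow> open S \<and> (\<forall>vs. \<forall>x\<in>S. dd vs f differentiable (at x))"

text \<open>Time derivative along the fast-slow vector field:
  dV/dt = eps (D_y V) g1 + (D_z V) g2, evaluated at (y,z,eps).\<close>
definition ddt ::
  "('m::real_normed_vector \<Rightarrow> 'n::real_normed_vector \<Rightarrow> real \<Rightarrow> 'v::real_normed_vector)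
   \<Rightarrow> ('m \<Rightarrow> 'n \<Rightarrow> real \<Rightarrow> 'm) \<Rightarrow> ('m \<Rightarrow> 'n \<Rightarrow> real \<Rightarrow> 'n)
   \<Rightarrow> 'm \<Rightarrow> 'n \<Rightarrow> real \<Rightarrow> 'v" where
  "ddt V g1 g2 y z eps =
     eps *\<^sub>R frechet_derivative (\<lambda>y'. V y' z eps) (at y) (g1 y z eps)
     + frechet_derivative (\<lambda>z'. V y z' eps) (at z) (g2 y z eps)"

end

theory Submission
  imports Defs
begin


lemma fd_local:
  assumes "open X" "x \<in> X" "\<And>y. y \<in> X \<Longrightarrow> f y = g y"
  shows "frechet_derivative f (at x) = frechet_derivative g (at x)"
proof -
  have "\<And>f'. (f has_derivative f') (at x) \<longleftrightarrow> (g has_derivative f') (at x)"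
    using has_derivative_transform_within_open[OF _ assms(1,2)] assms(3) by metis
  then show ?thesis unfolding frechet_derivative_def by simp
qed

lemma dd_snoc: "dd (vs @ [v]) f = dd vs (\<lambda>x. frechet_derivative f (at x) v)"
  by (induction vs) auto

lemma dd_append: "dd (vs @ ws) f = dd vs (dd ws f)"
  by (induction vs) auto

definition smoothN :: "nat \<Rightarrow> 'a::real_normed_vector set \<Rightarrow> ('a \<Rightarrow> 'b::real_normed_vector) \<Rightarrow> bool" where
  "smoothN n S f \<longleftrightarrow> (\<forall>vs. length vs \<le> n \<longrightarrow> (\<forall>x\<in>S. dd vs f differentiable (at x)))"

lemma smoothN_0: "smoothN 0 S f \<longleftrightarrow> (\<forall>x\<in>S. f differentiable (at x))"
  unfolding smoothN_def by auto

lemma smoothN_Suc: "smoothN (Suc n) S f \<longleftrightarrow>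
   (\<forall>x\<in>S. f differentiable (at x)) \<and> (\<forall>v. smoothN n S (\<lambda>x. frechet_derivative f (at x) v))"
proof
  assume a: "smoothN (Suc n) S f"
  show "(\<forall>x\<in>S. f differentiable (at x)) \<and> (\<forall>v. smoothN n S (\<lambda>x. frechet_derivative f (at x) v))"
  proof (intro conjI allI)
    show "\<forall>x\<in>S. f differentiable (at x)" using a[unfolded smoothN_def, rule_format, of "[]"] by auto
    fix v show "smoothN n S (\<lambda>x. frechet_derivative f (at x) v)"
      unfolding smoothN_def
    proof (intro allI impI)
      fix vs :: "'a list" assume "length vs \<le> n"
      then show "\<forall>x\<in>S. dd vs (\<lambda>x. frechet_derivative f (at x) v) differentiable at x"
        using a[unfolded smoothN_def, rule_format, of "vs @ [v]"] by (simp add: dd_snoc)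
    qed
  qed
next
  assume a: "(\<forall>x\<in>S. f differentiable (at x)) \<and> (\<forall>v. smoothN n S (\<lambda>x. frechet_derivative f (at x) v))"
  show "smoothN (Suc n) S f" unfolding smoothN_def
  proof (intro allI impI)
    fix vs :: "'a list" assume l: "length vs \<le> Suc n"
    show "\<forall>x\<in>S. dd vs f differentiable at x"
    proof (cases vs rule: rev_cases)
      case Nil then show ?thesis using a by simp
    next
      case (snoc ws v)
      then show ?thesis using a l unfolding smoothN_def by (simp add: dd_snoc)
    qed
  qed
qed

lemma smoothN_mono: "smoothN n S f \<Longrightarrow> m \<le> n \<Longrightarrow> smoothN m S f"
  unfolding smoothN_def by auto

lemma smoothN_diff: "smoothN n S f \<Longrightarrow> x \<in> S \<Longrightarrow> f differentiable (at x)"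
  by (cases n) (auto simp: smoothN_0 smoothN_Suc)

lemma smooth_on_iff: "smooth_on S f \<longleftrightarrow> open S \<and> (\<forall>n. smoothN n S f)"
  unfolding smooth_on_def smoothN_def by auto

lemma smoothN_local:
  assumes "open S" "\<And>x. x \<in> S \<Longrightarrow> f x = g x" "smoothN n S f"
  shows "smoothN n S g"
  using assms(2,3)
proof (induction n arbitrary: f g)
  case 0
  then show ?case unfolding smoothN_0
    using assms(1) by (metis differentiable_def has_derivative_transform_within_open)
next
  case (Suc n)
  have d: "\<forall>x\<in>S. g differentiable (at x)"
    using Suc.prems unfolding smoothN_Suc
    by (metis differentiable_def has_derivative_transform_within_open assms(1))
  have "smoothN n S (\<lambda>x. frechet_derivative g (at x) v)" for v
  proof (rule Suc.IH[of "\<lambda>x. frechet_derivative f (at x) v"])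
    show "\<And>x. x \<in> S \<Longrightarrow> frechet_derivative f (at x) v = frechet_derivative g (at x) v"
      using fd_local[OF assms(1)] Suc.prems(1) by metis
    show "smoothN n S (\<lambda>x. frechet_derivative f (at x) v)" using Suc.prems(2) smoothN_Suc by blast
  qed
  then show ?case using d smoothN_Suc by blast
qed

lemma smoothN_dd: "smoothN (n + length ws) S f \<Longrightarrow> smoothN n S (dd ws f)"
  unfolding smoothN_def by (auto simp: dd_append[symmetric])

lemma fd_linear_at:
  assumes "bounded_linear L" shows "frechet_derivative L (at x) = L"
  using assms frechet_derivative_at bounded_linear_imp_has_derivative by metis

lemma smoothN_const: "smoothN n S (\<lambda>x. c)"
proof (induction n arbitrary: c)
  case 0 then show ?case by (simp add: smoothN_0)
next
  case (Suc n) then show ?case by (simp add: smoothN_Suc frechet_derivative_const)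
qed

lemma smoothN_linear:
  assumes "bounded_linear L" shows "smoothN n S L"
proof (cases n)
  case 0 then show ?thesis using assms by (simp add: smoothN_0 bounded_linear_imp_differentiable)
next
  case (Suc m) then show ?thesis using assms
    by (simp add: smoothN_Suc bounded_linear_imp_differentiable fd_linear_at smoothN_const)
qed

lemma fd_eq: "(f has_derivative f') (at x) \<Longrightarrow> frechet_derivative f (at x) v = f' v"
  using frechet_derivative_at by metis

lemma fdw: "f differentiable (at x) \<Longrightarrow> (f has_derivative frechet_derivative f (at x)) (at x)"
  using frechet_derivative_works by blast

lemma smoothN_add:
  assumes "open S" shows "smoothN n S f \<Longrightarrow> smoothN n S g \<Longrightarrow> smoothN n S (\<lambda>x. f x + g x)"
proof (induction n arbitrary: f g)
  case 0 then show ?case by (auto simp: smoothN_0)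
next
  case (Suc n)
  have d: "\<forall>x\<in>S. (\<lambda>x. f x + g x) differentiable (at x)" using Suc.prems by (auto simp: smoothN_Suc)
  have "smoothN n S (\<lambda>x. frechet_derivative (\<lambda>x. f x + g x) (at x) v)" for v
  proof (rule smoothN_local[OF assms])
    show "smoothN n S (\<lambda>x. frechet_derivative f (at x) v + frechet_derivative g (at x) v)"
      using Suc by (auto simp: smoothN_Suc)
    fix x assume "x \<in> S"
    then have "f differentiable at x" "g differentiable at x" using Suc.prems by (auto simp: smoothN_Suc)
    then show "frechet_derivative f (at x) v + frechet_derivative g (at x) v = frechet_derivative (\<lambda>x. f x + g x) (at x) v"
      by (subst fd_eq[OF has_derivative_add[OF fdw fdw]]) auto
  qed
  then show ?case using d by (simp add: smoothN_Suc)
qed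


lemma smoothN_sum:
  assumes "open S" "finite I" shows "(\<And>i. i \<in> I \<Longrightarrow> smoothN n S (f i)) \<Longrightarrow> smoothN n S (\<lambda>x. \<Sum>i\<in>I. f i x)"
  using assms(2)
proof (induction I rule: finite_induct)
  case empty then show ?case by (simp add: smoothN_const)
next
  case (insert i I) then show ?case by (simp add: smoothN_add[OF assms(1)])
qed

lemma smoothN_scaleR:
  assumes "open S" shows "smoothN n S a \<Longrightarrow> smoothN n S u \<Longrightarrow> smoothN n S (\<lambda>x. a x *\<^sub>R u x)"
proof (induction n arbitrary: a u)
  case 0 then show ?case by (auto simp: smoothN_0)
next
  case (Suc n)
  have d: "\<forall>x\<in>S. (\<lambda>x. a x *\<^sub>R u x) differentiable (at x)" using Suc.prems by (auto simp: smoothN_Suc)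
  have "smoothN n S (\<lambda>x. frechet_derivative (\<lambda>x. a x *\<^sub>R u x) (at x) v)" for v
  proof (rule smoothN_local[OF assms])
    have a1: "smoothN n S a" "smoothN n S u" using Suc.prems smoothN_mono[of "Suc n" S _ n] by auto
    show "smoothN n S (\<lambda>x. a x *\<^sub>R frechet_derivative u (at x) v + frechet_derivative a (at x) v *\<^sub>R u x)"
      using Suc a1 by (intro smoothN_add[OF assms]) (auto simp: smoothN_Suc)
    fix x assume "x \<in> S"
    then have "a differentiable at x" "u differentiable at x" using Suc.prems by (auto simp: smoothN_Suc)
    then show "a x *\<^sub>R frechet_derivative u (at x) v + frechet_derivative a (at x) v *\<^sub>R u x = frechet_derivative (\<lambda>x. a x *\<^sub>R u x) (at x) v"
      by (subst fd_eq[OF has_derivative_scaleR[OF fdw fdw]]) auto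
  qed
  then show ?case using d by (simp add: smoothN_Suc)
qed

lemma bl_diff: "bounded_linear L \<Longrightarrow> f differentiable at x \<Longrightarrow> (\<lambda>x. L (f x)) differentiable at x"
  by (metis bounded_linear.has_derivative differentiable_def)

lemma smoothN_linear_left:
  assumes "open S" "bounded_linear L" shows "smoothN n S f \<Longrightarrow> smoothN n S (\<lambda>x. L (f x))"
proof (induction n arbitrary: f)
  case 0 then show ?case
    using bl_diff[OF assms(2)] by (auto simp: smoothN_0)
next
  case (Suc n)
  have d: "\<forall>x\<in>S. (\<lambda>x. L (f x)) differentiable (at x)"
    using Suc.prems bl_diff[OF assms(2)] by (auto simp: smoothN_Suc)
  have "smoothN n S (\<lambda>x. frechet_derivative (\<lambda>x. L (f x)) (at x) v)" for v
  proof (rule smoothN_local[OF assms(1)])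
    show "smoothN n S (\<lambda>x. L (frechet_derivative f (at x) v))"
      using Suc by (auto simp: smoothN_Suc)
    fix x assume "x \<in> S"
    then have "f differentiable at x" using Suc.prems by (auto simp: smoothN_Suc)
    then show "L (frechet_derivative f (at x) v) = frechet_derivative (\<lambda>x. L (f x)) (at x) v"
      by (subst fd_eq[OF bounded_linear.has_derivative[OF assms(2) fdw]]) auto
  qed
  then show ?case using d by (simp add: smoothN_Suc)
qed

lemma smoothN_pair:
  assumes "open S" shows "smoothN n S f \<Longrightarrow> smoothN n S g \<Longrightarrow> smoothN n S (\<lambda>x. (f x, g x))"
proof (induction n arbitrary: f g)
  case 0 then show ?case by (auto simp: smoothN_0 differentiable_Pair)
next
  case (Suc n)
  have d: "\<forall>x\<in>S. (\<lambda>x. (f x, g x)) differentiable (at x)" using Suc.prems by (auto simp: smoothN_Suc differentiable_Pair)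
  have "smoothN n S (\<lambda>x. frechet_derivative (\<lambda>x. (f x, g x)) (at x) v)" for v
  proof (rule smoothN_local[OF assms])
    show "smoothN n S (\<lambda>x. (frechet_derivative f (at x) v, frechet_derivative g (at x) v))"
      using Suc by (auto simp: smoothN_Suc)
    fix x assume "x \<in> S"
    then have "f differentiable at x" "g differentiable at x" using Suc.prems by (auto simp: smoothN_Suc)
    then show "(frechet_derivative f (at x) v, frechet_derivative g (at x) v) = frechet_derivative (\<lambda>x. (f x, g x)) (at x) v"
      by (subst fd_eq[OF has_derivative_Pair[OF fdw fdw]]) auto
  qed
  then show ?case using d by (simp add: smoothN_Suc)
qed

lemma fd_basis_expand:
  fixes g :: "'b::euclidean_space \<Rightarrow> 'c::real_normed_vector"
  assumes "g differentiable at y"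
  shows "frechet_derivative g (at y) w = (\<Sum>b\<in>Basis. (w \<bullet> b) *\<^sub>R frechet_derivative g (at y) b)"
proof -
  have "linear (frechet_derivative g (at y))" using linear_frechet_derivative[OF assms] .
  then have "frechet_derivative g (at y) (\<Sum>b\<in>Basis. (w \<bullet> b) *\<^sub>R b) = (\<Sum>b\<in>Basis. (w \<bullet> b) *\<^sub>R frechet_derivative g (at y) b)"
    by (simp add: linear_sum linear_scale)
  then show ?thesis by (simp add: euclidean_representation)
qed

lemma smoothN_compose:
  fixes f :: "'a::real_normed_vector \<Rightarrow> 'b::euclidean_space" and g :: "'b \<Rightarrow> 'c::real_normed_vector"
  assumes "open S" "f ` S \<subseteq> T"
  shows "smoothN n T g \<Longrightarrow> smoothN n S f \<Longrightarrow> smoothN n S (\<lambda>x. g (f x))"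
proof (induction n arbitrary: g)
  case 0 
  have "x \<in> S \<Longrightarrow> (\<lambda>x. g (f x)) differentiable (at x)" for x
  proof -
    assume x: "x \<in> S"
    then have "f differentiable at x" "g differentiable at (f x)" using 0 assms(2) by (auto simp: smoothN_0)
    then show ?thesis using differentiable_chain_at[of f x g] by (simp add: o_def)
  qed
  then show ?case by (simp add: smoothN_0)
next
  case (Suc n)
  have dfg: "f differentiable at x \<and> g differentiable at (f x)" if "x \<in> S" for x
    using Suc.prems assms(2) that by (auto simp: smoothN_Suc)
  have dd: "x \<in> S \<Longrightarrow> (\<lambda>x. g (f x)) differentiable (at x)" for x
    using dfg differentiable_chain_at[of f x g] by (simp add: o_def)
  have "smoothN n S (\<lambda>x. frechet_derivative (\<lambda>x. g (f x)) (at x) v)" for v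
  proof (rule smoothN_local[OF assms(1)])
    show "smoothN n S (\<lambda>x. \<Sum>b\<in>Basis. (frechet_derivative f (at x) v \<bullet> b) *\<^sub>R frechet_derivative g (at (f x)) b)"
    proof (rule smoothN_sum[OF assms(1) finite_Basis], rule smoothN_scaleR[OF assms(1)])
      fix b :: 'b assume "b \<in> Basis"
      have "smoothN n S (\<lambda>x. frechet_derivative f (at x) v)" using Suc.prems(2) by (simp add: smoothN_Suc)
      then show "smoothN n S (\<lambda>x. frechet_derivative f (at x) v \<bullet> b)"
        by (rule smoothN_linear_left[OF assms(1) bounded_linear_inner_left])
      have "smoothN n T (\<lambda>y. frechet_derivative g (at y) b)" using Suc.prems(1) by (simp add: smoothN_Suc)
      moreover have "smoothN n S f" using Suc.prems(2) smoothN_mono[of "Suc n" S f n] by simp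
      ultimately show "smoothN n S (\<lambda>x. frechet_derivative g (at (f x)) b)"
        by (rule Suc.IH)
    qed
    fix x assume x: "x \<in> S"
    then have df: "f differentiable at x" and dg: "g differentiable at (f x)" using dfg by auto
    have "frechet_derivative (\<lambda>x. g (f x)) (at x) v = frechet_derivative g (at (f x)) (frechet_derivative f (at x) v)"
      using fd_eq[OF diff_chain_at[OF fdw[OF df] fdw[OF dg]], of v] by (simp add: o_def)
    then show "(\<Sum>b\<in>Basis. (frechet_derivative f (at x) v \<bullet> b) *\<^sub>R frechet_derivative g (at (f x)) b) = frechet_derivative (\<lambda>x. g (f x)) (at x) v"
      using fd_basis_expand[OF dg, of "frechet_derivative f (at x) v"] by argo
  qed
  then show ?case using dd by (simp add: smoothN_Suc)
qed


lemma line_deriv: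
  assumes "F differentiable at (p + t *\<^sub>R c)"
  shows "((\<lambda>t. F (p + t *\<^sub>R c)) has_derivative (\<lambda>h. h *\<^sub>R frechet_derivative F (at (p + t *\<^sub>R c)) c)) (at t)"
proof -
  have l: "((\<lambda>t. p + t *\<^sub>R c) has_derivative (\<lambda>h. h *\<^sub>R c)) (at t)"
    by (auto intro!: derivative_eq_intros)
  have "((\<lambda>t. F (p + t *\<^sub>R c)) has_derivative (\<lambda>h. frechet_derivative F (at (p + t *\<^sub>R c)) (h *\<^sub>R c))) (at t)"
    using diff_chain_at[OF l fdw[OF assms]] by (simp add: o_def)
  moreover have "linear (frechet_derivative F (at (p + t *\<^sub>R c)))" using linear_frechet_derivative[OF assms] .
  ultimately show ?thesis by (simp add: linear_scale)
qed

lemma mvt_bound: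
  fixes k :: "real \<Rightarrow> 'b::real_inner"
  assumes "0 < t" "\<And>s. s \<in> {0..t} \<Longrightarrow> (k has_derivative (\<lambda>h. h *\<^sub>R k' s)) (at s)"
    "\<And>s. s \<in> {0..t} \<Longrightarrow> norm (k' s) \<le> B"
  shows "norm (k t - k 0) \<le> t * B"
proof -
  have "continuous_on {0..t} k"
    using assms(2) by (meson continuous_at_imp_continuous_on has_derivative_continuous)
  then obtain s where s: "s \<in> {0<..<t}" "norm (k t - k 0) \<le> norm ((t - 0) *\<^sub>R k' s)"
    using mvt_general[OF assms(1), of k "\<lambda>s h. h *\<^sub>R k' s"] assms(2) by auto
  then have "norm (k t - k 0) \<le> t * norm (k' s)" using assms(1) by simp
  also have "\<dots> \<le> t * B" using assms(1,3) s(1) by (intro mult_left_mono) auto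
  finally show ?thesis .
qed

lemma schwarz_key:
  fixes F :: "'a::real_normed_vector \<Rightarrow> 'b::real_inner"
  assumes S: "open S" "smoothN 2 S F" "x \<in> S" and e: "e > 0"
  shows "\<exists>d>0. \<forall>t. 0 < t \<and> t < d \<longrightarrow>
     norm (F (x + t *\<^sub>R a + t *\<^sub>R b) - F (x + t *\<^sub>R a) - F (x + t *\<^sub>R b) + F x
           - (t * t) *\<^sub>R frechet_derivative (\<lambda>y. frechet_derivative F (at y) a) (at x) b) \<le> e * (t * t)"
proof -
  define DA where "DA = (\<lambda>y. frechet_derivative F (at y) a)"
  define M where "M = frechet_derivative DA (at x) b"
  have sm1: "smoothN 1 S DA" using S(2) unfolding DA_def by (metis Suc_1 smoothN_Suc)
  have dF: "y \<in> S \<Longrightarrow> F differentiable at y" for y using S(2) smoothN_diff by blast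
  have dDA: "y \<in> S \<Longrightarrow> DA differentiable at y" for y using sm1 smoothN_diff by blast
  have "(\<lambda>y. frechet_derivative DA (at y) b) differentiable at x"
    using sm1 S(3) unfolding smoothN_Suc One_nat_def smoothN_0 by blast
  then have "continuous (at x) (\<lambda>y. frechet_derivative DA (at y) b)"
    using differentiable_imp_continuous_within by blast
  then obtain d1 where d1: "d1 > 0" "\<And>y. dist y x < d1 \<Longrightarrow> dist (frechet_derivative DA (at y) b) M \<le> e"
    unfolding continuous_at_eps_delta M_def using e by (metis less_imp_le)
  obtain d2 where d2: "d2 > 0" "ball x d2 \<subseteq> S" using S(1,3) open_contains_ball by blast
  define d where "d = min d1 d2 / (norm a + norm b + 1)"
  have dpos: "d > 0" unfolding d_def using d1(1) d2(1)
    by (intro divide_pos_pos) (auto intro: add_nonneg_pos add_nonneg_nonneg)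
  have npos: "0 < norm a + norm b + 1" using norm_ge_zero[of a] norm_ge_zero[of b] by linarith
  have pts: "x + s *\<^sub>R a + r *\<^sub>R b \<in> S \<and> dist (x + s *\<^sub>R a + r *\<^sub>R b) x < d1"
    if "0 \<le> s" "s \<le> t" "0 \<le> r" "r \<le> t" "t < d" for s r t
  proof -
    have "norm (s *\<^sub>R a + r *\<^sub>R b) \<le> s * norm a + r * norm b"
      using that norm_triangle_ineq[of "s *\<^sub>R a" "r *\<^sub>R b"] by simp
    also have "\<dots> \<le> t * (norm a + norm b + 1)"
    proof -
      have "s * norm a \<le> t * norm a" "r * norm b \<le> t * norm b" using that by (auto intro: mult_right_mono)
      then show ?thesis using that by (simp add: algebra_simps)
    qed
    also have "\<dots> < d * (norm a + norm b + 1)" using that npos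
      by (intro mult_strict_right_mono) auto
    also have "\<dots> = min d1 d2" unfolding d_def using npos by simp
    finally have n: "norm (s *\<^sub>R a + r *\<^sub>R b) < min d1 d2" .
    then have "dist (x + s *\<^sub>R a + r *\<^sub>R b) x < d2" "dist (x + s *\<^sub>R a + r *\<^sub>R b) x < d1"
      by (simp_all add: dist_norm add.assoc)
    then show ?thesis using d2(2) by (auto simp: dist_commute)
  qed
  have main: "norm (F (x + t *\<^sub>R a + t *\<^sub>R b) - F (x + t *\<^sub>R a) - F (x + t *\<^sub>R b) + F x - (t * t) *\<^sub>R M) \<le> e * (t * t)"
    if t: "0 < t" "t < d" for t
  proof -
    have inner: "norm (DA (x + s *\<^sub>R a + t *\<^sub>R b) - DA (x + s *\<^sub>R a) - t *\<^sub>R M) \<le> t * e"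
      if s: "0 \<le> s" "s \<le> t" for s
    proof -
      define k where "k = (\<lambda>r. DA ((x + s *\<^sub>R a) + r *\<^sub>R b) - r *\<^sub>R M)"
      have "norm (k t - k 0) \<le> t * e"
      proof (rule mvt_bound[OF t(1), where k' = "\<lambda>r. frechet_derivative DA (at ((x + s *\<^sub>R a) + r *\<^sub>R b)) b - M"])
        fix r assume r: "r \<in> {0..t}"
        then have p: "x + s *\<^sub>R a + r *\<^sub>R b \<in> S" "dist (x + s *\<^sub>R a + r *\<^sub>R b) x < d1"
          using pts[of s t r] s t by auto
        show "(k has_derivative (\<lambda>h. h *\<^sub>R (frechet_derivative DA (at ((x + s *\<^sub>R a) + r *\<^sub>R b)) b - M))) (at r)"
          unfolding k_def using has_derivative_diff[OF line_deriv[OF dDA[OF p(1)]] has_derivative_scaleR_left[OF has_derivative_ident, of M]]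
          by (simp add: scaleR_diff_right)
        show "norm (frechet_derivative DA (at ((x + s *\<^sub>R a) + r *\<^sub>R b)) b - M) \<le> e"
          using d1(2)[OF p(2)] by (simp add: dist_norm)
      qed
      then show ?thesis unfolding k_def by (simp add: algebra_simps)
    qed
    define g where "g = (\<lambda>s. F ((x + t *\<^sub>R b) + s *\<^sub>R a) - F (x + s *\<^sub>R a) - (s * t) *\<^sub>R M)"
    have "norm (g t - g 0) \<le> t * (t * e)"
    proof (rule mvt_bound[OF t(1), where k' = "\<lambda>s. DA ((x + t *\<^sub>R b) + s *\<^sub>R a) - DA (x + s *\<^sub>R a) - t *\<^sub>R M"])
      fix s assume s: "s \<in> {0..t}"
      then have p: "x + s *\<^sub>R a + t *\<^sub>R b \<in> S" "x + s *\<^sub>R a + 0 *\<^sub>R b \<in> S"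
        using pts[of s t t] pts[of s t 0] t by auto
      have p': "(x + t *\<^sub>R b) + s *\<^sub>R a \<in> S" "x + s *\<^sub>R a \<in> S" using p by (simp_all add: ac_simps)
      have "(g has_derivative (\<lambda>h. h *\<^sub>R frechet_derivative F (at ((x + t *\<^sub>R b) + s *\<^sub>R a)) a
              - h *\<^sub>R frechet_derivative F (at (x + s *\<^sub>R a)) a - h *\<^sub>R (t *\<^sub>R M))) (at s)"
        unfolding g_def
        using has_derivative_diff[OF has_derivative_diff[OF line_deriv[OF dF[OF p'(1)]] line_deriv[OF dF[OF p'(2)]]]
              has_derivative_scaleR_left[OF has_derivative_mult_left[OF has_derivative_ident], of t M]]
        by (simp add: scaleR_scaleR mult.commute)
      then show "(g has_derivative (\<lambda>h. h *\<^sub>R (DA ((x + t *\<^sub>R b) + s *\<^sub>R a) - DA (x + s *\<^sub>R a) - t *\<^sub>R M))) (at s)"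
        by (simp add: DA_def scaleR_diff_right)
      show "norm (DA ((x + t *\<^sub>R b) + s *\<^sub>R a) - DA (x + s *\<^sub>R a) - t *\<^sub>R M) \<le> t * e"
        using inner[of s] s by (simp add: ac_simps)
    qed
    then show ?thesis unfolding g_def by (simp add: algebra_simps)
  qed
  show ?thesis using dpos main unfolding M_def DA_def by blast
qed


lemma schwarz:
  fixes F :: "'a::real_normed_vector \<Rightarrow> 'b::real_inner"
  assumes S: "open S" "smoothN 2 S F" "x \<in> S"
  shows "frechet_derivative (\<lambda>y. frechet_derivative F (at y) a) (at x) b
       = frechet_derivative (\<lambda>y. frechet_derivative F (at y) b) (at x) a"
proof -
  define M where "M = frechet_derivative (\<lambda>y. frechet_derivative F (at y) a) (at x) b"
  define N where "N = frechet_derivative (\<lambda>y. frechet_derivative F (at y) b) (at x) a"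
  have "norm (M - N) \<le> 2 * e" if e: "e > 0" for e
  proof -
    obtain d1 where d1: "d1 > 0" "\<And>t. 0 < t \<and> t < d1 \<Longrightarrow>
     norm (F (x + t *\<^sub>R a + t *\<^sub>R b) - F (x + t *\<^sub>R a) - F (x + t *\<^sub>R b) + F x - (t * t) *\<^sub>R M) \<le> e * (t * t)"
      using schwarz_key[OF S e, of a b] unfolding M_def by blast
    obtain d2 where d2: "d2 > 0" "\<And>t. 0 < t \<and> t < d2 \<Longrightarrow>
     norm (F (x + t *\<^sub>R b + t *\<^sub>R a) - F (x + t *\<^sub>R b) - F (x + t *\<^sub>R a) + F x - (t * t) *\<^sub>R N) \<le> e * (t * t)"
      using schwarz_key[OF S e, of b a] unfolding N_def by blast
    define t where "t = min d1 d2 / 2"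
    have t: "0 < t" "t < d1" "t < d2" using d1 d2 by (auto simp: t_def)
    define \<Delta> where "\<Delta> = F (x + t *\<^sub>R a + t *\<^sub>R b) - F (x + t *\<^sub>R a) - F (x + t *\<^sub>R b) + F x"
    have 1: "norm (\<Delta> - (t * t) *\<^sub>R M) \<le> e * (t * t)" using d1(2)[of t] t unfolding \<Delta>_def by auto
    have 2: "norm (\<Delta> - (t * t) *\<^sub>R N) \<le> e * (t * t)" using d2(2)[of t] t unfolding \<Delta>_def
      by (simp add: algebra_simps)
    have "norm ((t * t) *\<^sub>R (M - N)) \<le> norm (\<Delta> - (t * t) *\<^sub>R M) + norm (\<Delta> - (t * t) *\<^sub>R N)"
      using norm_triangle_ineq4[of "\<Delta> - (t * t) *\<^sub>R N" "\<Delta> - (t * t) *\<^sub>R M"]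
      by (simp add: algebra_simps norm_minus_commute)
    also have "\<dots> \<le> (2 * e) * (t * t)" using 1 2 by simp
    finally have "(t * t) * norm (M - N) \<le> (t * t) * (2 * e)" using t by (simp add: mult.commute)
    then show ?thesis using t by (simp add: mult_le_cancel_left_pos)
  qed
  note ee = this
  have "norm (M - N) \<le> 0"
  proof (rule field_le_epsilon)
    fix e :: real assume "0 < e" then show "norm (M - N) \<le> 0 + e" using ee[of "e/2"] by simp
  qed
  then show ?thesis unfolding M_def N_def by simp
qed


lemma dd_comm:
  fixes F :: "'a::real_normed_vector \<Rightarrow> 'b::real_inner"
  assumes S: "open S" "\<forall>n. smoothN n S F"
  shows "x \<in> S \<Longrightarrow> dd (a # es) F x = dd (es @ [a]) F x"
proof (induction es arbitrary: x)
  case Nil then show ?case by simp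
next
  case (Cons e es)
  have sG: "smoothN 2 S (dd es F)" using S(2) smoothN_dd[of 2 es S F] by simp
  have "dd (a # e # es) F x = frechet_derivative (\<lambda>y. frechet_derivative (dd es F) (at y) e) (at x) a"
    by simp
  also have "\<dots> = frechet_derivative (\<lambda>y. frechet_derivative (dd es F) (at y) a) (at x) e"
    by (rule schwarz[OF S(1) sG Cons.prems])
  also have "\<dots> = frechet_derivative (dd (a # es) F) (at x) e" by simp
  also have "\<dots> = frechet_derivative (dd (es @ [a]) F) (at x) e"
    using fd_local[OF S(1) Cons.prems, of "dd (a # es) F" "dd (es @ [a]) F"] Cons.IH by simp
  also have "\<dots> = dd ((e # es) @ [a]) F x" by simp
  finally show ?case .
qed


definition Ob :: "nat \<Rightarrow> (real \<Rightarrow> 'a::real_normed_vector) \<Rightarrow> bool" where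
  "Ob k f \<longleftrightarrow> (\<exists>c. eventually (\<lambda>e. norm (f e) \<le> c * e ^ k) (at_right 0))"

lemma ev_pos: "eventually (\<lambda>e::real. 0 < e \<and> e < 1) (at_right 0)"
  using eventually_at_right_real[of 0 1] by simp

lemma Ob_iff: "Ob k f \<longleftrightarrow> (\<lambda>e. norm (f e)) \<in> O[at_right 0](\<lambda>e. e ^ k)"
proof
  assume "Ob k f"
  then obtain c where c: "eventually (\<lambda>e. norm (f e) \<le> c * e ^ k) (at_right 0)" unfolding Ob_def by blast
  show "(\<lambda>e. norm (f e)) \<in> O[at_right 0](\<lambda>e. e ^ k)"
    by (rule bigoI[of _ c]) (use eventually_conj[OF c ev_pos] in \<open>eventually_elim, simp\<close>)
next
  assume "(\<lambda>e. norm (f e)) \<in> O[at_right 0](\<lambda>e. e ^ k)"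
  then obtain c where c: "eventually (\<lambda>e. norm (norm (f e)) \<le> c * norm (e ^ k)) (at_right 0)"
    unfolding bigo_def by blast
  show "Ob k f" unfolding Ob_def
  proof (rule exI[of _ c])
    show "eventually (\<lambda>e. norm (f e) \<le> c * e ^ k) (at_right 0)"
      using eventually_conj[OF c ev_pos] by eventually_elim (auto simp: power_abs)
  qed
qed

lemma Ob_add: "Ob k f \<Longrightarrow> Ob k g \<Longrightarrow> Ob k (\<lambda>e. f e + g e)"
proof -
  assume "Ob k f" "Ob k g"
  then obtain c d where c: "eventually (\<lambda>e. norm (f e) \<le> c * e ^ k) (at_right 0)"
    and d: "eventually (\<lambda>e. norm (g e) \<le> d * e ^ k) (at_right 0)" unfolding Ob_def by blast
  show ?thesis unfolding Ob_def
  proof (rule exI[of _ "c + d"])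
    show "eventually (\<lambda>e. norm (f e + g e) \<le> (c + d) * e ^ k) (at_right 0)"
      using eventually_conj[OF c d]
    proof eventually_elim
      case (elim e) then show ?case using norm_triangle_ineq[of "f e" "g e"] by (simp add: algebra_simps)
    qed
  qed
qed

lemma Ob_minus: "Ob k f \<Longrightarrow> Ob k (\<lambda>e. - f e)"
  unfolding Ob_def by simp

lemma Ob_diff: "Ob k f \<Longrightarrow> Ob k g \<Longrightarrow> Ob k (\<lambda>e. f e - g e)"
  using Ob_add[OF _ Ob_minus, of k f g] by simp

lemma Ob_zero: "Ob k (\<lambda>e. 0)"
  unfolding Ob_def by (rule exI[of _ 0]) simp

lemma Ob_sum: "finite I \<Longrightarrow> (\<And>i. i \<in> I \<Longrightarrow> Ob k (f i)) \<Longrightarrow> Ob k (\<lambda>e. \<Sum>i\<in>I. f i e)"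
  by (induction I rule: finite_induct) (auto intro: Ob_add Ob_zero)

lemma Ob_cong: "Ob k f \<Longrightarrow> eventually (\<lambda>e. f e = g e) (at_right 0) \<Longrightarrow> Ob k g"
proof -
  assume "Ob k f" and ev: "eventually (\<lambda>e. f e = g e) (at_right 0)"
  then obtain c where c: "eventually (\<lambda>e. norm (f e) \<le> c * e ^ k) (at_right 0)" unfolding Ob_def by blast
  have "eventually (\<lambda>e. norm (g e) \<le> c * e ^ k) (at_right 0)"
    using eventually_conj[OF c ev] by eventually_elim auto
  then show ?thesis unfolding Ob_def by blast
qed

lemma Ob_mono: "Ob k f \<Longrightarrow> j \<le> k \<Longrightarrow> Ob j f"
proof -
  assume "Ob k f" "j \<le> k"
  then obtain c where c: "eventually (\<lambda>e. norm (f e) \<le> c * e ^ k) (at_right 0)" unfolding Ob_def by blast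
  show ?thesis unfolding Ob_def
  proof (rule exI[of _ "max c 0"])
    show "eventually (\<lambda>e. norm (f e) \<le> max c 0 * e ^ j) (at_right 0)"
      using eventually_conj[OF c ev_pos]
    proof eventually_elim
      case (elim e)
      have "e ^ k \<le> e ^ j" using elim \<open>j \<le> k\<close> by (intro power_decreasing) auto
      then have "c * e ^ k \<le> max c 0 * e ^ j" using elim
        by (smt (verit) mult_left_mono mult_right_mono zero_le_power)
      then show ?case using elim by linarith
    qed
  qed
qed

lemma Ob_scale_pow: "Ob k f \<Longrightarrow> Ob (k + j) (\<lambda>e. (e ^ j) *\<^sub>R f e)"
proof -
  assume "Ob k f"
  then obtain c where c: "eventually (\<lambda>e. norm (f e) \<le> c * e ^ k) (at_right 0)" unfolding Ob_def by blast
  show ?thesis unfolding Ob_def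
  proof (rule exI[of _ c])
    show "eventually (\<lambda>e. norm ((e ^ j) *\<^sub>R f e) \<le> c * e ^ (k + j)) (at_right 0)"
      using eventually_conj[OF c ev_pos]
    proof eventually_elim
      case (elim e)
      have "norm ((e ^ j) *\<^sub>R f e) = e ^ j * norm (f e)" using elim by simp
      also have "\<dots> \<le> e ^ j * (c * e ^ k)" using elim by (intro mult_left_mono) auto
      finally show ?case by (simp add: power_add algebra_simps)
    qed
  qed
qed

lemma Ob_pow_const: "Ob j (\<lambda>e. (e ^ j) *\<^sub>R v)"
  unfolding Ob_def
proof (rule exI[of _ "norm v"])
  show "eventually (\<lambda>e. norm ((e ^ j) *\<^sub>R v) \<le> norm v * e ^ j) (at_right 0)"
    using ev_pos by eventually_elim (simp add: mult.commute)
qed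

lemma Ob_bounded_linear: "bounded_linear L \<Longrightarrow> Ob k f \<Longrightarrow> Ob k (\<lambda>e. L (f e))"
proof -
  assume L: "bounded_linear L" and "Ob k f"
  then obtain c where c: "eventually (\<lambda>e. norm (f e) \<le> c * e ^ k) (at_right 0)" unfolding Ob_def by blast
  obtain K where K: "K > 0" "\<And>x. norm (L x) \<le> norm x * K" using bounded_linear.pos_bounded[OF L] by blast
  show ?thesis unfolding Ob_def
  proof (rule exI[of _ "K * c"])
    show "eventually (\<lambda>e. norm (L (f e)) \<le> (K * c) * e ^ k) (at_right 0)"
      using c
    proof eventually_elim
      case (elim e)
      have "norm (L (f e)) \<le> norm (f e) * K" by (rule K(2))
      also have "\<dots> \<le> (c * e ^ k) * K" using elim K(1) by (intro mult_right_mono) auto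
      finally show ?case by (simp add: algebra_simps)
    qed
  qed
qed

lemma Ob_0_bounded: "Ob 0 f \<longleftrightarrow> (\<exists>c. eventually (\<lambda>e. norm (f e) \<le> c) (at_right 0))"
  unfolding Ob_def by simp

lemma Ob_tendsto: "(f \<longlongrightarrow> l) (at_right 0) \<Longrightarrow> Ob 0 f"
proof -
  assume "(f \<longlongrightarrow> l) (at_right 0)"
  then have "eventually (\<lambda>e. dist (f e) l < 1) (at_right 0)" by (rule tendstoD) simp
  then have "eventually (\<lambda>e. norm (f e) \<le> norm l + 1) (at_right 0)"
    by eventually_elim (metis dist_norm norm_triangle_ineq2 add.commute less_imp_le order_trans
        diff_le_eq norm_minus_commute)
  then show ?thesis unfolding Ob_0_bounded by blast
qed

lemma Ob_mult: "Ob k a \<Longrightarrow> Ob j u \<Longrightarrow> Ob (k + j) (\<lambda>e. a e *\<^sub>R u e)"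
proof -
  assume "Ob k a" "Ob j u"
  then obtain c d where c: "eventually (\<lambda>e. norm (a e) \<le> c * e ^ k) (at_right 0)"
    and d: "eventually (\<lambda>e. norm (u e) \<le> d * e ^ j) (at_right 0)" unfolding Ob_def by blast
  show ?thesis unfolding Ob_def
  proof (rule exI[of _ "c * d"])
    show "eventually (\<lambda>e. norm (a e *\<^sub>R u e) \<le> (c * d) * e ^ (k + j)) (at_right 0)"
      using eventually_conj[OF c d]
    proof eventually_elim
      case (elim e)
      have "norm (a e *\<^sub>R u e) = norm (a e) * norm (u e)" by simp
      also have "\<dots> \<le> (c * e ^ k) * (d * e ^ j)" using elim
        by (intro mult_mono) (auto intro: order_trans[OF norm_ge_zero])
      finally show ?case by (simp add: power_add algebra_simps)
    qed
  qed
qed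

lemma Ob_tendsto0: "Ob (Suc k) f \<Longrightarrow> (f \<longlongrightarrow> 0) (at_right 0)"
proof -
  assume "Ob (Suc k) f"
  then obtain c where c: "eventually (\<lambda>e. norm (f e) \<le> c * e ^ Suc k) (at_right 0)" unfolding Ob_def by blast
  have "((\<lambda>e::real. c * e ^ Suc k) \<longlongrightarrow> c * 0 ^ Suc k) (at_right 0)"
    by (intro tendsto_intros tendsto_ident_at)
  then have "((\<lambda>e::real. c * e ^ Suc k) \<longlongrightarrow> 0) (at_right 0)" by simp
  then show ?thesis by (rule Lim_null_comparison[OF c])
qed


lemma mvt_bound':
  fixes k :: "real \<Rightarrow> 'b::real_inner"
  assumes "0 < t" "\<And>s. s \<in> {0..t} \<Longrightarrow> (k has_derivative (\<lambda>h. h *\<^sub>R k' s)) (at s)"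
    "\<And>s. s \<in> {0<..<t} \<Longrightarrow> norm (k' s) \<le> B"
  shows "norm (k t - k 0) \<le> t * B"
proof -
  have "continuous_on {0..t} k"
    using assms(2) by (meson continuous_at_imp_continuous_on has_derivative_continuous)
  then obtain s where s: "s \<in> {0<..<t}" "norm (k t - k 0) \<le> norm ((t - 0) *\<^sub>R k' s)"
    using mvt_general[OF assms(1), of k "\<lambda>s h. h *\<^sub>R k' s"] assms(2) by auto
  then have "norm (k t - k 0) \<le> t * norm (k' s)" using assms(1) by simp
  also have "\<dots> \<le> t * B" using assms(1,3) s(1) by (intro mult_left_mono) auto
  finally show ?thesis .
qed

lemma pow_fact_deriv:
  "((\<lambda>t::real. (t ^ Suc l / fact (Suc l)) *\<^sub>R v) has_derivative (\<lambda>h. h *\<^sub>R ((t ^ l / fact l) *\<^sub>R v))) (at t)"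
proof -
  have "((\<lambda>t::real. t ^ Suc l / fact (Suc l)) has_real_derivative (real (Suc l) * t ^ l / fact (Suc l))) (at t)"
    using DERIV_cdivide[OF DERIV_pow[of "Suc l" t], of "fact (Suc l)"] by simp
  moreover have "real (Suc l) * t ^ l / fact (Suc l) = t ^ l / fact l"
    by (simp add: fact_Suc divide_simps del: of_nat_Suc)
  ultimately have "((\<lambda>t::real. t ^ Suc l / fact (Suc l)) has_derivative (*) (t ^ l / fact l)) (at t)"
    by (simp only: has_field_derivative_def)
  from has_derivative_scaleR_left[OF this, of v] show ?thesis by (simp add: mult.commute)
qed

lemma taylor_Ob:
  fixes f :: "nat \<Rightarrow> real \<Rightarrow> 'b::real_inner"
  assumes d: "d > 0"
  shows "(\<And>k t. t \<in> {-d<..<d} \<Longrightarrow> (f k has_derivative (\<lambda>h. h *\<^sub>R f (Suc k) t)) (at t))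
     \<Longrightarrow> Ob n (\<lambda>t. f 0 t - (\<Sum>l<n. (t ^ l / fact l) *\<^sub>R f l 0))"
proof (induction n arbitrary: f)
  case 0
  have "(f 0 has_derivative (\<lambda>h. h *\<^sub>R f (Suc 0) 0)) (at 0)" using 0 d by simp
  then have "isCont (f 0) 0" using has_derivative_continuous by blast
  then have "(f 0 \<longlongrightarrow> f 0 0) (at_right 0)" by (simp add: continuous_at_imp_continuous_within isCont_def filterlim_at_split)
  then show ?case by (simp add: Ob_tendsto)
next
  case (Suc n)
  define R' where "R' = (\<lambda>t. f (Suc 0) t - (\<Sum>l<n. (t ^ l / fact l) *\<^sub>R f (Suc l) 0))"
  define R where "R = (\<lambda>t. f 0 t - f 0 0 - (\<Sum>l<n. (t ^ Suc l / fact (Suc l)) *\<^sub>R f (Suc l) 0))"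
  have IH: "Ob n R'" unfolding R'_def using Suc.IH[of "\<lambda>k. f (Suc k)"] Suc.prems by simp
  have Req: "f 0 t - (\<Sum>l<Suc n. (t ^ l / fact l) *\<^sub>R f l 0) = R t" for t
    unfolding R_def by (simp add: sum.lessThan_Suc_shift del: sum.lessThan_Suc fact_Suc)
  have Rder: "(R has_derivative (\<lambda>h. h *\<^sub>R R' t)) (at t)" if "t \<in> {-d<..<d}" for t
  proof -
    have "(R has_derivative (\<lambda>h. h *\<^sub>R f (Suc 0) t - 0 - (\<Sum>l<n. h *\<^sub>R ((t ^ l / fact l) *\<^sub>R f (Suc l) 0)))) (at t)"
      unfolding R_def
      by (intro has_derivative_diff has_derivative_sum Suc.prems[OF that, of 0] has_derivative_const
          pow_fact_deriv)
    then show ?thesis unfolding R'_def by (simp add: scaleR_diff_right scaleR_sum_right)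
  qed
  obtain c where c: "eventually (\<lambda>t. norm (R' t) \<le> c * t ^ n) (at_right 0)" using IH unfolding Ob_def by blast
  then obtain b where b: "b > 0" "\<And>t. 0 < t \<Longrightarrow> t < b \<Longrightarrow> norm (R' t) \<le> c * t ^ n"
    unfolding eventually_at_right_field by auto
  have "eventually (\<lambda>t. norm (R t) \<le> max c 0 * t ^ Suc n) (at_right 0)"
    unfolding eventually_at_right_field
  proof (intro exI[of _ "min b d"] conjI allI impI)
    show "0 < min b d" using b d by simp
    fix t :: real assume t: "0 < t" "t < min b d"
    have "norm (R t - R 0) \<le> t * (max c 0 * t ^ n)"
    proof (rule mvt_bound'[OF t(1)])
      show "(R has_derivative (\<lambda>h. h *\<^sub>R R' s)) (at s)" if "s \<in> {0..t}" for s
        using that t by (intro Rder) auto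
      show "norm (R' s) \<le> max c 0 * t ^ n" if s: "s \<in> {0<..<t}" for s
      proof -
        have "norm (R' s) \<le> c * s ^ n" using b(2)[of s] s t by auto
        also have "\<dots> \<le> max c 0 * s ^ n" using s by (intro mult_right_mono) auto
        also have "\<dots> \<le> max c 0 * t ^ n" using s by (intro mult_left_mono power_mono) auto
        finally show ?thesis .
      qed
    qed
    moreover have "R 0 = 0" unfolding R_def by simp
    ultimately show "norm (R t) \<le> max c 0 * t ^ Suc n" by (simp add: algebra_simps)
  qed
  then have "Ob (Suc n) R" unfolding Ob_def by blast
  then show ?case using Req by simp
qed


lemma Ob_div: "Ob (Suc k) (\<lambda>e. e *\<^sub>R g e) \<Longrightarrow> Ob k g"
proof -
  assume "Ob (Suc k) (\<lambda>e. e *\<^sub>R g e)"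
  then obtain c where c: "eventually (\<lambda>e. norm (e *\<^sub>R g e) \<le> c * e ^ Suc k) (at_right 0)" unfolding Ob_def by blast
  have "eventually (\<lambda>e. norm (g e) \<le> c * e ^ k) (at_right 0)"
    using eventually_conj[OF c ev_pos]
  proof eventually_elim
    case (elim e)
    then have e: "0 < e" and h: "e * norm (g e) \<le> e * (c * e ^ k)" by (auto simp: algebra_simps)
    then show ?case by (simp add: mult_le_cancel_left_pos)
  qed
  then show ?thesis unfolding Ob_def by blast
qed

lemma Ob_unique:
  fixes a :: "nat \<Rightarrow> 'a::real_normed_vector"
  shows "Ob (Suc q) (\<lambda>e. \<Sum>l\<le>q. (e ^ l) *\<^sub>R a l) \<Longrightarrow> l \<le> q \<Longrightarrow> a l = 0"
proof (induction q arbitrary: a l)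
  case 0
  have "((\<lambda>e. \<Sum>l\<le>0. (e ^ l) *\<^sub>R a l) \<longlongrightarrow> 0) (at_right (0::real))" using Ob_tendsto0[OF 0(1)] .
  then have "a 0 = 0" by (simp add: tendsto_const_iff)
  then show ?case using 0 by simp
next
  case (Suc q)
  have lim0: "((\<lambda>e. \<Sum>l\<le>Suc q. (e ^ l) *\<^sub>R a l) \<longlongrightarrow> 0) (at_right (0::real))" using Ob_tendsto0[OF Suc.prems(1)] .
  have "((\<lambda>e. \<Sum>l\<le>Suc q. (e ^ l) *\<^sub>R a l) \<longlongrightarrow> (\<Sum>l\<le>Suc q. ((0::real) ^ l) *\<^sub>R a l)) (at_right (0::real))"
    by (intro tendsto_intros)
  moreover have "(\<Sum>l\<le>Suc q. ((0::real) ^ l) *\<^sub>R a l) = a 0"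
    by (simp add: sum.atMost_Suc_shift del: sum.atMost_Suc)
  ultimately have a0: "a 0 = 0" using lim0 tendsto_unique[OF trivial_limit_at_right_real] by metis
  have eq: "(\<Sum>l\<le>Suc q. (e ^ l) *\<^sub>R a l) = e *\<^sub>R (\<Sum>l\<le>q. (e ^ l) *\<^sub>R a (Suc l))" for e :: real
    using a0 by (simp add: sum.atMost_Suc_shift scaleR_sum_right del: sum.atMost_Suc)
  have "Ob (Suc q) (\<lambda>e. \<Sum>l\<le>q. (e ^ l) *\<^sub>R a (Suc l))"
    using Suc.prems(1) unfolding eq by (rule Ob_div)
  note IH = Suc.IH[OF this]
  show ?case
  proof (cases l)
    case 0 then show ?thesis using a0 by simp
  next
    case (Suc m) then show ?thesis using IH[of m] \<open>l \<le> Suc q\<close> by simp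
  qed
qed

lemma dist_bound1: "dist u v < 1 \<Longrightarrow> norm u \<le> norm v + 1"
  using norm_triangle_ineq[of "u - v" v] by (simp add: dist_norm)

lemma lip_Ob:
  fixes F :: "'a::euclidean_space \<Rightarrow> 'b::real_normed_vector"
  assumes S: "open S" "smoothN 1 S F" "x0 \<in> S"
    and p: "(p \<longlongrightarrow> x0) (at_right 0)" "(p' \<longlongrightarrow> x0) (at_right 0)"
    and O: "Ob k (\<lambda>e. p e - p' e)"
  shows "Ob k (\<lambda>e. F (p e) - F (p' e))"
proof -
  define K where "K = (\<Sum>b\<in>Basis. norm (frechet_derivative F (at x0) b) + 1)"
  have dF: "x \<in> S \<Longrightarrow> F differentiable at x" for x using S(2) smoothN_diff by blast
  have "\<forall>b\<in>Basis. eventually (\<lambda>x. norm (frechet_derivative F (at x) b) \<le> norm (frechet_derivative F (at x0) b) + 1) (at x0)"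
  proof
    fix b :: 'a assume "b \<in> Basis"
    have "(\<lambda>x. frechet_derivative F (at x) b) differentiable at x0"
      using S(2,3) unfolding One_nat_def smoothN_Suc smoothN_0 by blast
    then have "isCont (\<lambda>x. frechet_derivative F (at x) b) x0"
      using differentiable_imp_continuous_within by blast
    then have "eventually (\<lambda>x. dist (frechet_derivative F (at x) b) (frechet_derivative F (at x0) b) < 1) (at x0)"
      unfolding isCont_def by (rule tendstoD) simp
    then show "eventually (\<lambda>x. norm (frechet_derivative F (at x) b) \<le> norm (frechet_derivative F (at x0) b) + 1) (at x0)"
      by eventually_elim (rule dist_bound1)
  qed
  then have "eventually (\<lambda>x. \<forall>b\<in>Basis. norm (frechet_derivative F (at x) b) \<le> norm (frechet_derivative F (at x0) b) + 1) (at x0)"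
    by (simp add: eventually_ball_finite)
  then obtain d1 where d1: "d1 > 0" "\<And>x. x \<noteq> x0 \<Longrightarrow> dist x x0 < d1 \<Longrightarrow> \<forall>b\<in>Basis. norm (frechet_derivative F (at x) b) \<le> norm (frechet_derivative F (at x0) b) + 1"
    unfolding eventually_at by auto
  obtain d2 where d2: "d2 > 0" "ball x0 d2 \<subseteq> S" using S(1,3) open_contains_ball by blast
  define B where "B = ball x0 (min d1 d2)"
  have BS: "B \<subseteq> S" using d2 unfolding B_def by auto
  have bnd: "norm (frechet_derivative F (at x) b) \<le> norm (frechet_derivative F (at x0) b) + 1" if "x \<in> B" "b \<in> Basis" for x b
    using d1(2)[of x] that unfolding B_def by (cases "x = x0") (auto simp: dist_commute)
  have onB: "onorm (frechet_derivative F (at x)) \<le> K" if x: "x \<in> B" for x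
  proof (rule onorm_le)
    fix v :: 'a
    have "norm (frechet_derivative F (at x) v) = norm (\<Sum>b\<in>Basis. (v \<bullet> b) *\<^sub>R frechet_derivative F (at x) b)"
      using fd_basis_expand[OF dF[OF subsetD[OF BS x]], of v] by simp
    also have "\<dots> \<le> (\<Sum>b\<in>Basis. norm ((v \<bullet> b) *\<^sub>R frechet_derivative F (at x) b))" by (rule norm_sum)
    also have "\<dots> \<le> (\<Sum>b\<in>Basis. norm v * (norm (frechet_derivative F (at x0) b) + 1))"
    proof (rule sum_mono)
      fix b :: 'a assume b: "b \<in> Basis"
      have "norm ((v \<bullet> b) *\<^sub>R frechet_derivative F (at x) b) = \<bar>v \<bullet> b\<bar> * norm (frechet_derivative F (at x) b)" by simp
      also have "\<dots> \<le> norm v * (norm (frechet_derivative F (at x0) b) + 1)"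
        using Basis_le_norm[OF b, of v] bnd[OF x b] by (intro mult_mono) auto
      finally show "norm ((v \<bullet> b) *\<^sub>R frechet_derivative F (at x) b) \<le> norm v * (norm (frechet_derivative F (at x0) b) + 1)" .
    qed
    also have "\<dots> = K * norm v" unfolding K_def by (simp add: sum_distrib_left mult.commute)
    finally show "norm (frechet_derivative F (at x) v) \<le> K * norm v" .
  qed
  have lipB: "norm (F x - F y) \<le> K * norm (x - y)" if "x \<in> B" "y \<in> B" for x y
  proof (rule differentiable_bound[of B])
    show "convex B" unfolding B_def by simp
    show "(F has_derivative frechet_derivative F (at z)) (at z within B)" if "z \<in> B" for z
      using fdw[OF dF[OF subsetD[OF BS that]]] has_derivative_at_withinI by blast
    show "onorm (frechet_derivative F (at z)) \<le> K" if "z \<in> B" for z using onB that by blast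
  qed (use that in auto)
  have evB: "eventually (\<lambda>e. p e \<in> B \<and> p' e \<in> B) (at_right 0)"
  proof -
    have "open B" "x0 \<in> B" unfolding B_def using d1 d2 by auto
    then have "eventually (\<lambda>e. p e \<in> B) (at_right 0)" "eventually (\<lambda>e. p' e \<in> B) (at_right 0)"
      using topological_tendstoD[OF p(1)] topological_tendstoD[OF p(2)] by auto
    then show ?thesis by (rule eventually_conj)
  qed
  obtain c where c: "eventually (\<lambda>e. norm (p e - p' e) \<le> c * e ^ k) (at_right 0)" using O unfolding Ob_def by blast
  have Kpos: "K \<ge> 0" unfolding K_def by (intro sum_nonneg) (simp add: add_nonneg_nonneg)
  have "eventually (\<lambda>e. norm (F (p e) - F (p' e)) \<le> (K * c) * e ^ k) (at_right 0)"
    using eventually_conj[OF evB c]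
  proof eventually_elim
    case (elim e)
    then have "norm (F (p e) - F (p' e)) \<le> K * norm (p e - p' e)" using lipB by blast
    also have "\<dots> \<le> K * (c * e ^ k)" using elim Kpos by (intro mult_left_mono) auto
    finally show ?case by (simp add: mult.assoc)
  qed
  then show ?thesis unfolding Ob_def by blast
qed



lemma fd_comp:
  assumes "(g has_derivative g') (at x)" "F differentiable at (g x)"
  shows "frechet_derivative (\<lambda>x. F (g x)) (at x) v = frechet_derivative F (at (g x)) (g' v)"
  using fd_eq[OF diff_chain_at[OF assms(1) fdw[OF assms(2)]], of v] by (simp add: o_def)

lemma smoothN_LD:
  fixes F :: "'a::euclidean_space \<Rightarrow> 'b::real_normed_vector"
  assumes S: "open S" "smoothN (Suc n) S F"
  shows "smoothN n (S \<times> UNIV) (\<lambda>xw. frechet_derivative F (at (fst xw)) (snd xw))"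
proof (rule smoothN_local)
  have oS: "open (S \<times> (UNIV :: 'a set))" using S(1) by (simp add: open_Times)
  then show "open (S \<times> (UNIV :: 'a set))" .
  show "smoothN n (S \<times> UNIV) (\<lambda>xw. \<Sum>b\<in>Basis. (snd xw \<bullet> b) *\<^sub>R frechet_derivative F (at (fst xw)) b)"
  proof (rule smoothN_sum[OF oS finite_Basis], rule smoothN_scaleR[OF oS])
    fix b :: 'a assume "b \<in> Basis"
    show "smoothN n (S \<times> UNIV) (\<lambda>xw. snd xw \<bullet> b)"
      by (rule smoothN_linear) (intro bounded_linear_compose[OF bounded_linear_inner_left bounded_linear_snd])
    have sD: "smoothN n S (\<lambda>x. frechet_derivative F (at x) b)" using S(2) smoothN_Suc by blast
    show "smoothN n (S \<times> UNIV) (\<lambda>xw::'a\<times>'a. frechet_derivative F (at (fst xw)) b)"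
    proof -
      have sf: "smoothN n (S \<times> UNIV) (fst :: 'a \<times> 'a \<Rightarrow> 'a)" by (rule smoothN_linear[OF bounded_linear_fst])
      have "fst ` (S \<times> (UNIV :: 'a set)) \<subseteq> S" by auto
      from smoothN_compose[OF oS this sD sf] show ?thesis by simp
    qed
  qed
  fix xw :: "'a \<times> 'a" assume "xw \<in> S \<times> UNIV"
  then have "F differentiable at (fst xw)" using S(2) smoothN_diff by (metis mem_Times_iff)
  then show "(\<Sum>b\<in>Basis. (snd xw \<bullet> b) *\<^sub>R frechet_derivative F (at (fst xw)) b) = frechet_derivative F (at (fst xw)) (snd xw)"
    using fd_basis_expand by metis
qed

lemma Ob_pair: "Ob k f \<Longrightarrow> Ob k g \<Longrightarrow> Ob k (\<lambda>e. (f e, g e))"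
proof -
  assume f: "Ob k f" and g: "Ob k g"
  have "Ob k (\<lambda>e. (f e, 0) + (0, g e))"
    by (intro Ob_add Ob_bounded_linear[OF _ f] Ob_bounded_linear[OF _ g] bounded_linear_Pair
        bounded_linear_ident bounded_linear_zero)
  then show ?thesis by simp
qed

lemma poly_part:
  fixes X :: "nat \<Rightarrow> nat \<Rightarrow> 'a::real_normed_vector"
  shows "Ob (q + 1) (\<lambda>e. e *\<^sub>R (\<Sum>k\<le>q. e ^ k *\<^sub>R (\<Sum>l<q. e ^ l *\<^sub>R X l k))
           - (\<Sum>i\<le>q. e ^ (i + 1) *\<^sub>R (\<Sum>l\<le>i. X l (i - l))))"
proof -
  define t where "t = (\<lambda>x (e::real). e ^ (fst x + snd x + 1) *\<^sub>R X (fst x) (snd x))"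
  define A where "A = {..<q} \<times> {..q}"
  define B where "B = {(l, k). l + k \<le> q}"
  define C where "C = {..q} \<times> {..q}"
  have fC: "finite C" unfolding C_def by simp
  have AC: "A = C \<inter> A" unfolding A_def C_def by auto
  have BC: "B = C \<inter> B" unfolding B_def C_def by auto
  have L1: "e *\<^sub>R (\<Sum>k\<le>q. e ^ k *\<^sub>R (\<Sum>l<q. e ^ l *\<^sub>R X l k)) = (\<Sum>x\<in>A. t x e)" for e
  proof -
    have "(\<Sum>x\<in>A. t x e) = (\<Sum>l<q. \<Sum>k\<le>q. e ^ (l + k + 1) *\<^sub>R X l k)"
      unfolding A_def t_def by (simp add: sum.cartesian_product case_prod_unfold)
    also have "\<dots> = (\<Sum>k\<le>q. \<Sum>l<q. e ^ (l + k + 1) *\<^sub>R X l k)" by (rule sum.swap)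
    also have "\<dots> = e *\<^sub>R (\<Sum>k\<le>q. e ^ k *\<^sub>R (\<Sum>l<q. e ^ l *\<^sub>R X l k))"
      by (simp add: scaleR_sum_right power_add mult_ac)
    finally show ?thesis by simp
  qed
  have L2: "(\<Sum>i\<le>q. e ^ (i + 1) *\<^sub>R (\<Sum>l\<le>i. X l (i - l))) = (\<Sum>x\<in>B. t x e)" for e
  proof -
    have "(\<Sum>x\<in>B. t x e) = (\<Sum>i\<le>q. \<Sum>l\<le>i. e ^ (l + (i - l) + 1) *\<^sub>R X l (i - l))"
      unfolding B_def t_def using sum.triangle_reindex_eq[of "\<lambda>l k. e ^ (l + k + 1) *\<^sub>R X l k" q]
      by (simp add: case_prod_unfold)
    also have "\<dots> = (\<Sum>i\<le>q. e ^ (i + 1) *\<^sub>R (\<Sum>l\<le>i. X l (i - l)))"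
      by (intro sum.cong refl) (simp add: scaleR_sum_right)
    finally show ?thesis by simp
  qed
  define c where "c = (\<lambda>x e. (if x \<in> A then t x e else 0) - (if x \<in> B then t x e else 0))"
  have eq: "e *\<^sub>R (\<Sum>k\<le>q. e ^ k *\<^sub>R (\<Sum>l<q. e ^ l *\<^sub>R X l k))
           - (\<Sum>i\<le>q. e ^ (i + 1) *\<^sub>R (\<Sum>l\<le>i. X l (i - l))) = (\<Sum>x\<in>C. c x e)" for e
  proof -
    have "(\<Sum>x\<in>A. t x e) = (\<Sum>x\<in>C. if x \<in> A then t x e else 0)"
      by (subst AC) (rule sum.inter_restrict[OF fC])
    moreover have "(\<Sum>x\<in>B. t x e) = (\<Sum>x\<in>C. if x \<in> B then t x e else 0)"
      by (subst BC) (rule sum.inter_restrict[OF fC])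
    ultimately show ?thesis unfolding L1 L2 c_def by (simp add: sum_subtractf)
  qed
  have "Ob (q + 1) (\<lambda>e. \<Sum>x\<in>C. c x e)"
  proof (rule Ob_sum[OF fC])
    fix x assume "x \<in> C"
    obtain l k where x: "x = (l, k)" by (cases x)
    show "Ob (q + 1) (c x)"
    proof (cases "l + k < q")
      case True
      then have "x \<in> A" "x \<in> B" unfolding x A_def B_def by auto
      then have "c x = (\<lambda>e. 0)" unfolding c_def by auto
      then show ?thesis by (simp add: Ob_zero)
    next
      case False
      have "c x = (\<lambda>e. e ^ (l + k + 1) *\<^sub>R ((if x \<in> A then 1 else 0) - (if x \<in> B then 1 else 0)) *\<^sub>R X l k)"
        unfolding c_def t_def x by (auto simp: fun_eq_iff)
      moreover have "Ob (q + 1) (\<lambda>e. e ^ (l + k + 1) *\<^sub>R (((if x \<in> A then 1 else 0) - (if x \<in> B then 1 else 0)) *\<^sub>R X l k))"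
        by (rule Ob_mono[OF Ob_pow_const]) (use False in simp)
      ultimately show ?thesis by simp
    qed
  qed
  then show ?thesis using eq by simp
qed

theorem lemmaA2:
  fixes g1 :: "real^'m \<Rightarrow> real^'n \<Rightarrow> real \<Rightarrow> real^'m"
    and g2 :: "real^'m \<Rightarrow> real^'n \<Rightarrow> real \<Rightarrow> real^'n"
    and h :: "real \<Rightarrow> real^'m \<Rightarrow> real^'n"
    and psi :: "real^'m \<Rightarrow> real \<Rightarrow> real^'n"
    and V :: "real^'m \<Rightarrow> real^'n \<Rightarrow> real \<Rightarrow> real^'c^'r"
    and Vl :: "nat \<Rightarrow> real^'m \<Rightarrow> real^'c^'r"
    and g1l :: "nat \<Rightarrow> real^'m \<Rightarrow> real^'m"
    and U :: "(real^'m) set" and e0 :: real and q :: nat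
  assumes U_open: "open U" and e0_pos: "e0 > 0"
    and g1_smooth: "smooth_on UNIV (\<lambda>(y, z, eps). g1 y z eps)"
    and g2_smooth: "smooth_on UNIV (\<lambda>(y, z, eps). g2 y z eps)"
    and h_smooth: "smooth_on (U \<times> {-e0<..<e0}) (\<lambda>(y, eps). h eps y)"
    and invariance: "\<forall>y\<in>U. \<forall>eps\<in>{0<..<e0}.
          g2 y (h eps y) eps = eps *\<^sub>R frechet_derivative (h eps) (at y) (g1 y (h eps y) eps)"
    and psi_diff: "\<forall>y\<in>U. \<forall>eps\<in>{0<..<e0}. (\<lambda>y'. psi y' eps) differentiable (at y)"
    and psi_approx: "\<forall>y\<in>U. (\<lambda>eps. norm (psi y eps - h eps y)) \<in> O[at_right 0](\<lambda>eps. eps ^ (q + 1))"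
    and Dpsi_approx: "\<forall>y\<in>U. (\<lambda>eps. onorm (\<lambda>v. frechet_derivative (\<lambda>y'. psi y' eps) (at y) v
                                             - frechet_derivative (h eps) (at y) v))
                          \<in> O[at_right 0](\<lambda>eps. eps ^ (q + 1))"
    and V_smooth: "smooth_on UNIV (\<lambda>(y, z, eps). V y z eps)"
    and V_bounded: "\<forall>y z. (\<lambda>eps. norm (V y z eps)) \<in> O[at_right 0](\<lambda>_. 1)"
    and V_exp: "\<forall>y\<in>U. (\<lambda>eps. norm (V y (psi y eps) eps - (\<Sum>l\<le>q. eps ^ l *\<^sub>R Vl l y)))
                          \<in> O[at_right 0](\<lambda>eps. eps ^ (q + 1))"
    and g1_exp: "\<forall>y\<in>U. (\<lambda>eps. norm (g1 y (psi y eps) eps - (\<Sum>l\<le>q. eps ^ l *\<^sub>R g1l l y)))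
                          \<in> O[at_right 0](\<lambda>eps. eps ^ (q + 1))"
  shows "\<forall>y\<in>U. (\<lambda>eps. norm (ddt V g1 g2 y (psi y eps) eps
              - (\<Sum>i\<le>q. eps ^ (i + 1) *\<^sub>R
                   (\<Sum>l\<le>i. frechet_derivative (Vl l) (at y) (g1l (i - l) y)))))
           \<in> O[at_right 0](\<lambda>eps. eps ^ (q + 1))"
proof -
  define S0 where "S0 = U \<times> {-e0<..<e0}"
  define Vh where "Vh = (\<lambda>(y, z, eps). V y z eps)"
  define G1h where "G1h = (\<lambda>(y, z, eps). g1 y z eps)"
  define G2h where "G2h = (\<lambda>(y, z, eps). g2 y z eps)"
  define Hh where "Hh = (\<lambda>(y, eps). h eps y)"
  define Phi where "Phi = (\<lambda>x::(real^'m) \<times> real. (fst x, Hh x, snd x))"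
  define W where "W = (\<lambda>x. Vh (Phi x))"
  have oS0: "open S0" unfolding S0_def using U_open by (simp add: open_Times)
  have inS0: "(y, e) \<in> S0" if "y \<in> U" "\<bar>e\<bar> < e0" for y e using that unfolding S0_def by auto
  have Vh_eq[simp]: "Vh (y, z, e) = V y z e" for y z e by (simp add: Vh_def)
  have G1h_eq[simp]: "G1h (y, z, e) = g1 y z e" for y z e by (simp add: G1h_def)
  have G2h_eq[simp]: "G2h (y, z, e) = g2 y z e" for y z e by (simp add: G2h_def)
  have Hh_eq[simp]: "Hh (y, e) = h e y" for y e by (simp add: Hh_def)
  have W_eq: "W (y, e) = V y (h e y) e" for y e by (simp add: W_def Phi_def)
  have sV: "\<And>n. smoothN n UNIV Vh" using V_smooth unfolding Vh_def smooth_on_iff by blast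
  have sG1: "\<And>n. smoothN n UNIV G1h" using g1_smooth unfolding G1h_def smooth_on_iff by blast
  have sG2: "\<And>n. smoothN n UNIV G2h" using g2_smooth unfolding G2h_def smooth_on_iff by blast
  have sH: "\<And>n. smoothN n S0 Hh" using h_smooth unfolding Hh_def S0_def smooth_on_iff by blast
  have sPhi: "\<And>n. smoothN n S0 Phi"
    unfolding Phi_def
    by (intro smoothN_pair[OF oS0] smoothN_linear bounded_linear_fst bounded_linear_snd sH)
  have sW: "\<And>n. smoothN n S0 W"
    unfolding W_def by (rule smoothN_compose[OF oS0 _ sV sPhi]) auto
  have sWo: "smooth_on S0 W" using sW oS0 smooth_on_iff by blast
  have evE: "eventually (\<lambda>e. 0 < e \<and> e < e0) (at_right 0)"
    using eventually_at_right_real[OF e0_pos] by simp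
  have ident: "((\<lambda>e::real. e) \<longlongrightarrow> 0) (at_right 0)" by (rule tendsto_ident_at)
  have hlim: "((\<lambda>e. h e y) \<longlongrightarrow> h 0 y) (at_right 0)" if y: "y \<in> U" for y
  proof -
    have "Hh differentiable at (y, 0)" using smoothN_diff[OF sH[of 0]] inS0[OF y] e0_pos by auto
    then have "isCont Hh (y, 0)" using differentiable_imp_continuous_within by blast
    from isCont_tendsto_compose[OF this tendsto_Pair[OF tendsto_const ident]]
    show ?thesis by simp
  qed
  have psiO: "Ob (q + 1) (\<lambda>e. psi y e - h e y)" if y: "y \<in> U" for y
    using psi_approx y unfolding Ob_iff by blast
  have psilim: "((\<lambda>e. psi y e) \<longlongrightarrow> h 0 y) (at_right 0)" if y: "y \<in> U" for y
  proof -
    have "((\<lambda>e. psi y e - h e y) \<longlongrightarrow> 0) (at_right 0)" using Ob_tendsto0 psiO[OF y] by simp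
    from tendsto_add[OF this hlim[OF y]] show ?thesis by simp
  qed
  have VpsiW: "Ob (q + 1) (\<lambda>e. V y (psi y e) e - W (y, e))" if y: "y \<in> U" for y
  proof -
    have "Ob (q + 1) (\<lambda>e. Vh (y, psi y e, e) - Vh (y, h e y, e))"
    proof (rule lip_Ob[OF open_UNIV sV UNIV_I])
      show "((\<lambda>e. (y, psi y e, e)) \<longlongrightarrow> (y, h 0 y, 0)) (at_right 0)"
        by (intro tendsto_Pair tendsto_const psilim[OF y] ident)
      show "((\<lambda>e. (y, h e y, e)) \<longlongrightarrow> (y, h 0 y, 0)) (at_right 0)"
        by (intro tendsto_Pair tendsto_const hlim[OF y] ident)
      have "Ob (q + 1) (\<lambda>e. (0::real^'m, psi y e - h e y, 0::real))"
        by (intro Ob_pair Ob_zero psiO[OF y])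
      then show "Ob (q + 1) (\<lambda>e. (y, psi y e, e) - (y, h e y, e))" by simp
    qed
    then show ?thesis by (simp add: W_eq)
  qed
  have taylorW: "Ob n (\<lambda>t. dd vs W (y, t) - (\<Sum>l<n. (t ^ l / fact l) *\<^sub>R dd (replicate l (0, 1) @ vs) W (y, 0)))"
    if y: "y \<in> U" for y vs n
  proof -
    have "Ob n (\<lambda>t. (\<lambda>k t. dd (replicate k (0, 1) @ vs) W (y, t)) 0 t
       - (\<Sum>l<n. (t ^ l / fact l) *\<^sub>R (\<lambda>k t. dd (replicate k (0, 1) @ vs) W (y, t)) l 0))"
    proof (rule taylor_Ob[OF e0_pos])
      fix k t assume t: "t \<in> {-e0<..<e0}"
      have "dd (replicate k (0, 1) @ vs) W differentiable at ((y, 0) + t *\<^sub>R (0, 1))"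
        using sWo inS0[OF y, of t] t unfolding smooth_on_def by auto
      from line_deriv[OF this]
      show "((\<lambda>t. dd (replicate k (0, 1) @ vs) W (y, t)) has_derivative
              (\<lambda>h. h *\<^sub>R dd (replicate (Suc k) (0, 1) @ vs) W (y, t))) (at t)"
        by simp
    qed
    then show ?thesis by simp
  qed
  have VlW: "Vl l y = (1 / fact l) *\<^sub>R dd (replicate l (0, 1)) W (y, 0)" if y: "y \<in> U" and l: "l \<le> q" for y l
  proof -
    have T: "Ob (q + 1) (\<lambda>t. W (y, t) - (\<Sum>l\<le>q. (t ^ l / fact l) *\<^sub>R dd (replicate l (0, 1)) W (y, 0)))"
      using taylorW[OF y, where vs="[]" and n="q + 1"] by (simp add: lessThan_Suc_atMost)
    have E: "Ob (q + 1) (\<lambda>e. V y (psi y e) e - (\<Sum>l\<le>q. e ^ l *\<^sub>R Vl l y))"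
      using V_exp y unfolding Ob_iff by blast
    have "Ob (q + 1) (\<lambda>e. (V y (psi y e) e - W (y, e)) - (V y (psi y e) e - (\<Sum>l\<le>q. e ^ l *\<^sub>R Vl l y))
        + (W (y, e) - (\<Sum>l\<le>q. (e ^ l / fact l) *\<^sub>R dd (replicate l (0, 1)) W (y, 0))))"
      by (intro Ob_add Ob_diff VpsiW[OF y] E T)
    then have "Ob (Suc q) (\<lambda>e. \<Sum>l\<le>q. e ^ l *\<^sub>R (Vl l y - (1 / fact l) *\<^sub>R dd (replicate l (0, 1)) W (y, 0)))"
      by (simp add: scaleR_diff_right sum_subtractf algebra_simps)
    from Ob_unique[OF this l] show ?thesis by simp
  qed
  have dV: "Vh differentiable at x" for x using smoothN_diff[OF sV[of 0]] by simp
  have dW: "x \<in> S0 \<Longrightarrow> W differentiable at x" for x using smoothN_diff[OF sW[of 0]] by simp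
  have dH: "x \<in> S0 \<Longrightarrow> Hh differentiable at x" for x using smoothN_diff[OF sH[of 0]] by simp
  have linV: "linear (frechet_derivative Vh (at x))" for x using linear_frechet_derivative[OF dV] .
  have linW: "x \<in> S0 \<Longrightarrow> linear (frechet_derivative W (at x))" for x using linear_frechet_derivative[OF dW] .
  have dpair1: "((\<lambda>y'. (y', z, e)) has_derivative (\<lambda>a. (a, 0, 0))) (at y)" for y :: "real^'m" and z :: "real^'n" and e :: real
    by (auto intro!: derivative_eq_intros simp: zero_prod_def)
  have dpair2: "((\<lambda>z'. (y, z', e)) has_derivative (\<lambda>b. (0, b, 0))) (at z)" for y :: "real^'m" and z :: "real^'n" and e :: real
    by (auto intro!: derivative_eq_intros simp: zero_prod_def)
  have dpair3: "((\<lambda>y'. (y', e)) has_derivative (\<lambda>a. (a, 0))) (at y)" for y :: "real^'m" and e :: real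
    by (auto intro!: derivative_eq_intros simp: zero_prod_def)
  have partY: "frechet_derivative (\<lambda>y'. V y' z e) (at y) a = frechet_derivative Vh (at (y, z, e)) (a, 0, 0)" for y z e a
    using fd_comp[OF dpair1[where y=y and z=z and e=e] dV, of a] by simp
  have partZ: "frechet_derivative (\<lambda>z'. V y z' e) (at z) b = frechet_derivative Vh (at (y, z, e)) (0, b, 0)" for y z e b
    using fd_comp[OF dpair2[where y=y and z=z and e=e] dV, of b] by simp
  have partH: "frechet_derivative (h e) (at y) a = frechet_derivative Hh (at (y, e)) (a, 0)" if "(y, e) \<in> S0" for y e a
    using fd_comp[OF dpair3[where y=y and e=e] dH[OF that], of a] by (simp add: Hh_def)
  have dPhi: "(Phi has_derivative (\<lambda>v. (fst v, frechet_derivative Hh (at x) v, snd v))) (at x)" if "x \<in> S0" for x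
    unfolding Phi_def by (intro has_derivative_Pair has_derivative_fst has_derivative_snd has_derivative_ident fdw dH that)
  have partW: "frechet_derivative W (at (y, e)) (a, 0) = frechet_derivative Vh (at (y, h e y, e)) (a, frechet_derivative Hh (at (y, e)) (a, 0), 0)"
    if "(y, e) \<in> S0" for y e a
    using fd_comp[OF dPhi[OF that] dV, of "(a, 0)"] unfolding W_def by (simp add: Phi_def)
  define LV where "LV = (\<lambda>xw. frechet_derivative Vh (at (fst xw)) (snd xw))"
  have sLV: "smoothN n UNIV LV" for n using smoothN_LD[OF open_UNIV sV[of "Suc n"]] unfolding LV_def by simp
  show ?thesis
  proof
    fix y0 assume y0: "y0 \<in> U"
    define p where "p = (\<lambda>e. (y0, psi y0 e, e))"
    define p' where "p' = (\<lambda>e. (y0, h e y0, e))"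
    define x0 where "x0 = (y0, h 0 y0, 0::real)"
    have plim: "(p \<longlongrightarrow> x0) (at_right 0)" unfolding p_def x0_def
      by (intro tendsto_Pair tendsto_const psilim[OF y0] ident)
    have p'lim: "(p' \<longlongrightarrow> x0) (at_right 0)" unfolding p'_def x0_def
      by (intro tendsto_Pair tendsto_const hlim[OF y0] ident)
    have pO: "Ob (q + 1) (\<lambda>e. p e - p' e)"
    proof -
      have "Ob (q + 1) (\<lambda>e. (0::real^'m, psi y0 e - h e y0, 0::real))"
        by (intro Ob_pair Ob_zero psiO[OF y0])
      then show ?thesis by (simp add: p_def p'_def)
    qed
    have contlim: "((\<lambda>e. F (p e)) \<longlongrightarrow> F x0) (at_right 0) \<and> ((\<lambda>e. F (p' e)) \<longlongrightarrow> F x0) (at_right 0)"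
      if "\<And>n. smoothN n UNIV F" for F :: "_ \<Rightarrow> 'z::real_normed_vector"
    proof -
      have "isCont F x0" using smoothN_diff[OF that[of 0]] differentiable_imp_continuous_within by blast
      then show ?thesis using isCont_tendsto_compose plim p'lim by blast
    qed
    have G1O: "Ob (q + 1) (\<lambda>e. G1h (p e) - G1h (p' e))" by (rule lip_Ob[OF open_UNIV sG1 UNIV_I plim p'lim pO])
    have G2O: "Ob (q + 1) (\<lambda>e. G2h (p e) - G2h (p' e))" by (rule lip_Ob[OF open_UNIV sG2 UNIV_I plim p'lim pO])
    have B1: "Ob (q + 1) (\<lambda>e. LV (p e, (G1h (p e), 0, 0)) - LV (p' e, (G1h (p' e), 0, 0)))"
    proof (rule lip_Ob[OF open_UNIV sLV UNIV_I])
      show "((\<lambda>e. (p e, G1h (p e), 0::real^'n, 0::real)) \<longlongrightarrow> (x0, G1h x0, 0, 0)) (at_right 0)"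
        using contlim[OF sG1] by (intro tendsto_Pair plim tendsto_const) auto
      show "((\<lambda>e. (p' e, G1h (p' e), 0::real^'n, 0::real)) \<longlongrightarrow> (x0, G1h x0, 0, 0)) (at_right 0)"
        using contlim[OF sG1] by (intro tendsto_Pair p'lim tendsto_const) auto
      have "Ob (q + 1) (\<lambda>e. (p e - p' e, G1h (p e) - G1h (p' e), 0::real^'n, 0::real))"
        by (intro Ob_pair pO G1O Ob_zero)
      then show "Ob (q + 1) (\<lambda>e. (p e, G1h (p e), 0::real^'n, 0::real) - (p' e, G1h (p' e), 0, 0))" by (simp add: zero_prod_def)
    qed
    have B2: "Ob (q + 1) (\<lambda>e. LV (p e, (0, G2h (p e), 0)) - LV (p' e, (0, G2h (p' e), 0)))"
    proof (rule lip_Ob[OF open_UNIV sLV UNIV_I])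
      show "((\<lambda>e. (p e, 0::real^'m, G2h (p e), 0::real)) \<longlongrightarrow> (x0, 0, G2h x0, 0)) (at_right 0)"
        using contlim[OF sG2] by (intro tendsto_Pair plim tendsto_const) auto
      show "((\<lambda>e. (p' e, 0::real^'m, G2h (p' e), 0::real)) \<longlongrightarrow> (x0, 0, G2h x0, 0)) (at_right 0)"
        using contlim[OF sG2] by (intro tendsto_Pair p'lim tendsto_const) auto
      have "Ob (q + 1) (\<lambda>e. (p e - p' e, 0::real^'m, G2h (p e) - G2h (p' e), 0::real))"
        by (intro Ob_pair pO G2O Ob_zero)
      then show "Ob (q + 1) (\<lambda>e. (p e, 0::real^'m, G2h (p e), 0::real) - (p' e, 0, G2h (p' e), 0))" by (simp add: zero_prod_def)
    qed
    define T1 where "T1 = (\<lambda>e. e *\<^sub>R frechet_derivative W (at (y0, e)) (G1h (p' e), 0))"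
    have ddt_eq: "ddt V g1 g2 y0 (psi y0 e) e = e *\<^sub>R LV (p e, (G1h (p e), 0, 0)) + LV (p e, (0, G2h (p e), 0))" for e
      unfolding ddt_def LV_def p_def by (simp add: partY partZ)
    have T1_eq: "T1 e = e *\<^sub>R LV (p' e, (G1h (p' e), 0, 0)) + LV (p' e, (0, G2h (p' e), 0))"
      if e: "0 < e" "e < e0" for e
    proof -
      have S: "(y0, e) \<in> S0" using inS0[OF y0] e by auto
      have inv: "G2h (p' e) = e *\<^sub>R frechet_derivative Hh (at (y0, e)) (G1h (p' e), 0)"
        using invariance y0 e partH[OF S] by (simp add: p'_def)
      have "T1 e = e *\<^sub>R LV (p' e, (G1h (p' e), frechet_derivative Hh (at (y0, e)) (G1h (p' e), 0), 0))"
        unfolding T1_def LV_def using partW[OF S] by (simp add: p'_def)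
      also have "\<dots> = e *\<^sub>R LV (p' e, (G1h (p' e), 0, 0)) + e *\<^sub>R LV (p' e, (0, frechet_derivative Hh (at (y0, e)) (G1h (p' e), 0), 0))"
      proof -
        have eq: "(G1h (p' e), frechet_derivative Hh (at (y0, e)) (G1h (p' e), 0), 0::real) =
              (G1h (p' e), 0, 0) + (0, frechet_derivative Hh (at (y0, e)) (G1h (p' e), 0), 0)" by simp
        have "LV (p' e, (G1h (p' e), frechet_derivative Hh (at (y0, e)) (G1h (p' e), 0), 0)) =
           LV (p' e, (G1h (p' e), 0, 0)) + LV (p' e, (0, frechet_derivative Hh (at (y0, e)) (G1h (p' e), 0), 0))"
          unfolding LV_def fst_conv snd_conv eq by (rule linear_add[OF linV])
        then show ?thesis by (simp add: scaleR_add_right)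
      qed
      also have "\<dots> = e *\<^sub>R LV (p' e, (G1h (p' e), 0, 0)) + LV (p' e, (0, G2h (p' e), 0))"
      proof -
        have "(0::real^'m, G2h (p' e), 0::real) = e *\<^sub>R (0, frechet_derivative Hh (at (y0, e)) (G1h (p' e), 0), 0)"
          using inv by simp
        then have "LV (p' e, (0, G2h (p' e), 0)) = e *\<^sub>R LV (p' e, (0, frechet_derivative Hh (at (y0, e)) (G1h (p' e), 0), 0))"
          unfolding LV_def fst_conv snd_conv by (simp only: linear_scale[OF linV])
        then show ?thesis by simp
      qed
      finally show ?thesis .
    qed
    have A: "Ob (q + 1) (\<lambda>e. ddt V g1 g2 y0 (psi y0 e) e - T1 e)"
    proof (rule Ob_cong)
      show "Ob (q + 1) (\<lambda>e. e *\<^sub>R (LV (p e, (G1h (p e), 0, 0)) - LV (p' e, (G1h (p' e), 0, 0)))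
         + (LV (p e, (0, G2h (p e), 0)) - LV (p' e, (0, G2h (p' e), 0))))"
        by (intro Ob_add B2 Ob_mono[OF Ob_scale_pow[OF B1, of 1, simplified]]) simp
      show "eventually (\<lambda>e. e *\<^sub>R (LV (p e, (G1h (p e), 0, 0)) - LV (p' e, (G1h (p' e), 0, 0)))
         + (LV (p e, (0, G2h (p e), 0)) - LV (p' e, (0, G2h (p' e), 0))) = ddt V g1 g2 y0 (psi y0 e) e - T1 e) (at_right 0)"
        using evE by eventually_elim (simp add: ddt_eq T1_eq scaleR_diff_right algebra_simps)
    qed
    show "(\<lambda>eps. norm (ddt V g1 g2 y0 (psi y0 eps) eps
              - (\<Sum>i\<le>q. eps ^ (i + 1) *\<^sub>R
                   (\<Sum>l\<le>i. frechet_derivative (Vl l) (at y0) (g1l (i - l) y0)))))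
           \<in> O[at_right 0](\<lambda>eps. eps ^ (q + 1))"
    proof -
      have sWall: "\<forall>n. smoothN n S0 W" using sW by blast
      have y00: "(y0, 0) \<in> S0" using inS0[OF y0] e0_pos by simp
      have DVl: "frechet_derivative (Vl l) (at y0) a = (1 / fact l) *\<^sub>R dd (replicate l (0, 1) @ [(a, 0)]) W (y0, 0)"
        if l: "l \<le> q" for l a
      proof -
        define es where "es = replicate l (0::real^'m, 1::real)"
        define c :: real where "c = 1 / fact l"
        have dG: "dd es W differentiable at (y0, 0)" using sWo y00 unfolding smooth_on_def by blast
        have "frechet_derivative (Vl l) (at y0) = frechet_derivative (\<lambda>y. c *\<^sub>R dd es W (y, 0)) (at y0)"
          by (rule fd_local[OF U_open y0]) (use VlW l in \<open>simp add: c_def es_def\<close>)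
        then have "frechet_derivative (Vl l) (at y0) a = frechet_derivative (\<lambda>x. c *\<^sub>R dd es W x) (at (y0, 0)) (a, 0)"
          using fd_comp[OF dpair3[where y=y0 and e=0] bl_diff[OF bounded_linear_scaleR_right[where r=c] dG], where v=a] by simp
        also have "\<dots> = c *\<^sub>R frechet_derivative (dd es W) (at (y0, 0)) (a, 0)"
          by (rule fd_eq[OF bounded_linear.has_derivative[OF bounded_linear_scaleR_right[where r=c] fdw[OF dG]]])
        also have "\<dots> = c *\<^sub>R dd ((a, 0) # es) W (y0, 0)" by simp
        also have "\<dots> = c *\<^sub>R dd (es @ [(a, 0)]) W (y0, 0)" using dd_comm[OF oS0 sWall y00] by simp
        finally show ?thesis unfolding c_def es_def .
      qed
      have Cp: "Ob q (\<lambda>e. frechet_derivative W (at (y0, e)) (a, 0) - (\<Sum>l<q. e ^ l *\<^sub>R frechet_derivative (Vl l) (at y0) a))" for a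
      proof -
        have T: "Ob q (\<lambda>t. dd [(a, 0)] W (y0, t) - (\<Sum>l<q. (t ^ l / fact l) *\<^sub>R dd (replicate l (0, 1) @ [(a, 0)]) W (y0, 0)))"
          using taylorW[OF y0, where vs="[(a, 0)]" and n=q] by simp
        have "(\<Sum>l<q. (t ^ l / fact l) *\<^sub>R dd (replicate l (0, 1) @ [(a, 0)]) W (y0, 0)) = (\<Sum>l<q. t ^ l *\<^sub>R frechet_derivative (Vl l) (at y0) a)" for t
          by (intro sum.cong refl) (simp add: DVl)
        then show ?thesis using T by simp
      qed
      define D where "D = (\<lambda>e. G1h (p' e) - (\<Sum>k\<le>q. e ^ k *\<^sub>R g1l k y0))"
      have DO: "Ob (q + 1) D"
      proof -
        have "Ob (q + 1) (\<lambda>e. g1 y0 (psi y0 e) e - (\<Sum>l\<le>q. e ^ l *\<^sub>R g1l l y0))"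
          using g1_exp y0 unfolding Ob_iff by blast
        from Ob_diff[OF this G1O] show ?thesis unfolding D_def by (simp add: p_def)
      qed
      define LW where "LW = (\<lambda>xw. frechet_derivative W (at (fst xw)) (snd xw))"
      have sLW: "smoothN n (S0 \<times> UNIV) LW" for n using smoothN_LD[OF oS0 sW[of "Suc n"]] unfolding LW_def by simp
      have oS0U: "open (S0 \<times> (UNIV :: ((real^'m) \<times> real) set))" using oS0 by (simp add: open_Times)
      have BW: "Ob (q + 1) (\<lambda>e. frechet_derivative W (at (y0, e)) (D e, 0))"
      proof -
        have "Ob (q + 1) (\<lambda>e. LW ((y0, e), (D e, 0)) - LW ((y0, e), (0, 0)))"
        proof (rule lip_Ob[OF oS0U sLW])
          show "((y0, 0), (0, 0)) \<in> S0 \<times> UNIV" using y00 by simp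
          have Dl: "(D \<longlongrightarrow> 0) (at_right 0)" using Ob_tendsto0[of q D] DO by simp
          show "((\<lambda>e. ((y0, e), (D e, 0::real))) \<longlongrightarrow> ((y0, 0), (0, 0))) (at_right 0)"
            by (intro tendsto_Pair tendsto_const ident Dl)
          show "((\<lambda>e::real. ((y0, e), (0::real^'m, 0::real))) \<longlongrightarrow> ((y0, 0), (0, 0))) (at_right 0)"
            by (intro tendsto_Pair tendsto_const ident)
          have "Ob (q + 1) (\<lambda>e. ((0::real^'m, 0::real), (D e, 0::real)))"
            by (intro Ob_pair Ob_zero DO)
          then show "Ob (q + 1) (\<lambda>e. ((y0, e), (D e, 0::real)) - ((y0, e), (0, 0)))" by (simp add: zero_prod_def)
        qed
        moreover have "eventually (\<lambda>e. LW ((y0, e), (D e, 0)) - LW ((y0, e), (0, 0)) = frechet_derivative W (at (y0, e)) (D e, 0)) (at_right 0)"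
          using evE
        proof eventually_elim
          case (elim e)
          then have "(y0, e) \<in> S0" using inS0[OF y0] by auto
          then show ?case unfolding LW_def using linear_0[OF linW] by (simp add: zero_prod_def[symmetric])
        qed
        ultimately show ?thesis by (rule Ob_cong)
      qed
      have BB: "Ob (q + 1) (\<lambda>e. T1 e - e *\<^sub>R (\<Sum>k\<le>q. e ^ k *\<^sub>R frechet_derivative W (at (y0, e)) (g1l k y0, 0)))"
      proof (rule Ob_cong)
        show "Ob (q + 1) (\<lambda>e. e *\<^sub>R frechet_derivative W (at (y0, e)) (D e, 0))"
          by (rule Ob_mono[OF Ob_scale_pow[OF BW, of 1, simplified]]) simp
        show "eventually (\<lambda>e. e *\<^sub>R frechet_derivative W (at (y0, e)) (D e, 0)
            = T1 e - e *\<^sub>R (\<Sum>k\<le>q. e ^ k *\<^sub>R frechet_derivative W (at (y0, e)) (g1l k y0, 0))) (at_right 0)"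
          using evE
        proof eventually_elim
          case (elim e)
          then have S: "(y0, e) \<in> S0" using inS0[OF y0] by auto
          have linM: "linear (\<lambda>v. frechet_derivative W (at (y0, e)) (v, 0))"
          proof (rule linearI)
            fix v w :: "real^'m" and r :: real
            show "frechet_derivative W (at (y0, e)) (v + w, 0) = frechet_derivative W (at (y0, e)) (v, 0) + frechet_derivative W (at (y0, e)) (w, 0)"
              using linear_add[OF linW[OF S], of "(v, 0)" "(w, 0)"] by simp
            show "frechet_derivative W (at (y0, e)) (r *\<^sub>R v, 0) = r *\<^sub>R frechet_derivative W (at (y0, e)) (v, 0)"
              using linear_scale[OF linW[OF S], of r "(v, 0)"] by simp
          qed
          have "frechet_derivative W (at (y0, e)) (D e, 0) = frechet_derivative W (at (y0, e)) (G1h (p' e), 0)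
              - (\<Sum>k\<le>q. e ^ k *\<^sub>R frechet_derivative W (at (y0, e)) (g1l k y0, 0))"
          proof -
            have s1: "frechet_derivative W (at (y0, e)) (\<Sum>k\<le>q. e ^ k *\<^sub>R g1l k y0, 0) = (\<Sum>k\<le>q. e ^ k *\<^sub>R frechet_derivative W (at (y0, e)) (g1l k y0, 0))"
              using linear_sum[OF linM, of "\<lambda>k. e ^ k *\<^sub>R g1l k y0" "{..q}"] linear_scale[OF linM] by simp
            show ?thesis unfolding D_def using linear_diff[OF linM, of "G1h (p' e)" "\<Sum>k\<le>q. e ^ k *\<^sub>R g1l k y0"] s1 by simp
          qed
          then show ?case unfolding T1_def by (simp add: scaleR_diff_right)
        qed
      qed
      define X where "X = (\<lambda>l k. frechet_derivative (Vl l) (at y0) (g1l k y0))"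
      have CC: "Ob (q + 1) (\<lambda>e. e *\<^sub>R (\<Sum>k\<le>q. e ^ k *\<^sub>R frechet_derivative W (at (y0, e)) (g1l k y0, 0))
           - e *\<^sub>R (\<Sum>k\<le>q. e ^ k *\<^sub>R (\<Sum>l<q. e ^ l *\<^sub>R X l k)))"
      proof -
        have "Ob (q + 1) (\<lambda>e. \<Sum>k\<le>q. e ^ Suc k *\<^sub>R (frechet_derivative W (at (y0, e)) (g1l k y0, 0) - (\<Sum>l<q. e ^ l *\<^sub>R X l k)))"
        proof (rule Ob_sum)
          fix k assume "k \<in> {..q}"
          show "Ob (q + 1) (\<lambda>e. e ^ Suc k *\<^sub>R (frechet_derivative W (at (y0, e)) (g1l k y0, 0) - (\<Sum>l<q. e ^ l *\<^sub>R X l k)))"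
            unfolding X_def by (rule Ob_mono[OF Ob_scale_pow[OF Cp[of "g1l k y0"]]]) simp
        qed simp
        moreover have "(\<Sum>k\<le>q. e ^ Suc k *\<^sub>R (frechet_derivative W (at (y0, e)) (g1l k y0, 0) - (\<Sum>l<q. e ^ l *\<^sub>R X l k)))
          = e *\<^sub>R (\<Sum>k\<le>q. e ^ k *\<^sub>R frechet_derivative W (at (y0, e)) (g1l k y0, 0))
           - e *\<^sub>R (\<Sum>k\<le>q. e ^ k *\<^sub>R (\<Sum>l<q. e ^ l *\<^sub>R X l k))" for e
          by (simp add: scaleR_sum_right scaleR_diff_right sum_subtractf mult.assoc)
        ultimately show ?thesis by simp
      qed
      have PP: "Ob (q + 1) (\<lambda>e. e *\<^sub>R (\<Sum>k\<le>q. e ^ k *\<^sub>R (\<Sum>l<q. e ^ l *\<^sub>R X l k))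
           - (\<Sum>i\<le>q. e ^ (i + 1) *\<^sub>R (\<Sum>l\<le>i. X l (i - l))))"
        by (rule poly_part)
      have "Ob (q + 1) (\<lambda>e. (ddt V g1 g2 y0 (psi y0 e) e - T1 e)
          + (T1 e - e *\<^sub>R (\<Sum>k\<le>q. e ^ k *\<^sub>R frechet_derivative W (at (y0, e)) (g1l k y0, 0)))
          + (e *\<^sub>R (\<Sum>k\<le>q. e ^ k *\<^sub>R frechet_derivative W (at (y0, e)) (g1l k y0, 0))
           - e *\<^sub>R (\<Sum>k\<le>q. e ^ k *\<^sub>R (\<Sum>l<q. e ^ l *\<^sub>R X l k)))
          + (e *\<^sub>R (\<Sum>k\<le>q. e ^ k *\<^sub>R (\<Sum>l<q. e ^ l *\<^sub>R X l k))
           - (\<Sum>i\<le>q. e ^ (i + 1) *\<^sub>R (\<Sum>l\<le>i. X l (i - l)))))"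
        by (intro Ob_add A BB CC PP)
      then have "Ob (q + 1) (\<lambda>e. ddt V g1 g2 y0 (psi y0 e) e - (\<Sum>i\<le>q. e ^ (i + 1) *\<^sub>R (\<Sum>l\<le>i. X l (i - l))))"
        by simp
      then show ?thesis unfolding Ob_iff X_def .
    qed
  qed
qed

end
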